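(* Let $R_0>0$, $T>0$, $D=[0,R_0]$, $L^2(D)=L^2([0,R_0];r^2)$, $\lambda_n=(n\pi/R_0)^2$ and $\omega_n(r)=\frac{\sqrt2\, n\pi}{\sqrt{R_0^3}}\frac{\sin(n\pi r/R_0)}{n\pi r/R_0}$ for $n\ge1$. Let $a:[0,T]\to\mathbb{R}$ satisfy $0<a_0\le a(t)\le a_1$. Let $B^H$ be a fractional Brownian motion with Hurst index $H\in(0,1)$. Assume $f,g\in L^2(D)$ with $\|g\|_{L^2(D)}\ne0$, and $h\in L^\infty(0,T)$ with $h\ge C(h)>0$ a.e. on $(0,T)$. With $f_n=\int_0^{R_0}r^2f\omega_n\,dr$, $g_n=\int_0^{R_0}r^2g\omega_n\,dr$, define for $n\ge1$ $$u_n(T)=f_n\int_0^T h(\tau)e^{-\lambda_n\int_\tau^T a(s)ds}\,d\tau+g_n\int_0^T e^{-\lambda_n\int_\tau^T a(s)ds}\,dB^H(\tau),$$ the Fourier coefficients of the final-time value $u(\cdot,T)$ of the mild solution $u(r,t)=\sum_n u_n(t)\omega_n(r)$ (with $T$ replaced by $t$ in the formula). Then $f$ and $|g|$ (i.e. $g$ up to sign) are uniquely determined by the data set $\{\mathbb{E}(u_n(T)),\ \mathrm{Cov}(u_m(T),u_n(T)) : m,n\in\mathbb{N}\}$.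
   Context: $u$ is the mild solution of $u_t=a(t)[u_{rr}+\frac{2}{r}u_r]+f(r)h(t)+g(r)\dot B^H(t)$ on $0<r<R_0$, $0<t<T$, with $u(r,0)=0$, $u(R_0,t)=0$, $u$ bounded as $r\to0$. The functions $\omega_n$ form a complete orthonormal system of $L^2([0,R_0];r^2)$ (inner product $\int_0^{R_0}r^2\phi\psi\,dr$). A fractional Brownian motion $B^H$ is a centered Gaussian process with $B^H(0)=0$ and covariance $\mathbb{E}[B^H(t)B^H(s)]=\frac12(t^{2H}+s^{2H}-|t-s|^{2H})$; stochastic integrals of deterministic integrands are Wiener integrals with respect to $B^H$. $a,h,H$ are known; the unknowns are $f$ and $g$. *)

theory Defs
  imports "HOL-Probability.Probability"
begin

definition lam :: "real \<Rightarrow> nat \<Rightarrow> real" where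
  "lam R0 n = (real n * pi / R0)^2"

definition omega :: "real \<Rightarrow> nat \<Rightarrow> real \<Rightarrow> real" where
  "omega R0 n r =
     sqrt 2 * (real n * pi) / sqrt (R0^3) *
     (let x = real n * pi * r / R0 in if x = 0 then 1 else sin x / x)"

definition L2r :: "real \<Rightarrow> (real \<Rightarrow> real) \<Rightarrow> bool" where
  "L2r R0 f \<longleftrightarrow> set_borel_measurable lborel {0..R0} f \<and>
      set_integrable lborel {0..R0} (\<lambda>r. r^2 * (f r)^2)"

definition L2r_norm_sq :: "real \<Rightarrow> (real \<Rightarrow> real) \<Rightarrow> real" where
  "L2r_norm_sq R0 f = (LINT r:{0..R0}|lborel. r^2 * (f r)^2)"

definition coef :: "real \<Rightarrow> (real \<Rightarrow> real) \<Rightarrow> nat \<Rightarrow> real" where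
  "coef R0 f n = (LINT r:{0..R0}|lborel. r^2 * f r * omega R0 n r)"

definition centered_gaussian :: "'w measure \<Rightarrow> ('w \<Rightarrow> real) \<Rightarrow> bool" where
  "centered_gaussian M X \<longleftrightarrow>
     (\<exists>\<sigma>>0. distributed M lborel X (normal_density 0 \<sigma>)) \<or>
     (X \<in> borel_measurable M \<and> (AE w in M. X w = 0))"

definition fbm :: "'w measure \<Rightarrow> real \<Rightarrow> (real \<Rightarrow> 'w \<Rightarrow> real) \<Rightarrow> bool" where
  "fbm M H B \<longleftrightarrow> prob_space M \<and> 0 < H \<and> H < 1 \<and>
     (\<forall>t\<ge>0. B t \<in> borel_measurable M) \<and>
     (AE w in M. B 0 w = 0) \<and>
     (\<forall>S c. finite S \<longrightarrow> S \<subseteq> {0..} \<longrightarrow>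
        centered_gaussian M (\<lambda>w. \<Sum>t\<in>S. c t * B t w)) \<and>
     (\<forall>s\<ge>0. \<forall>t\<ge>0. integrable M (\<lambda>w. B t w * B s w) \<and>
        integral\<^sup>L M (\<lambda>w. B t w * B s w) =
          (t powr (2*H) + s powr (2*H) - \<bar>t - s\<bar> powr (2*H)) / 2)"

definition riemann_sum ::
  "(real \<Rightarrow> 'w \<Rightarrow> real) \<Rightarrow> real \<Rightarrow> (real \<Rightarrow> real) \<Rightarrow> nat \<Rightarrow> 'w \<Rightarrow> real" where
  "riemann_sum B T \<phi> k w =
     (\<Sum>i<Suc k. \<phi> (T * real i / real (Suc k)) *
        (B (T * real (Suc i) / real (Suc k)) w - B (T * real i / real (Suc k)) w))"

definition wiener_integral ::
  "'w measure \<Rightarrow> (real \<Rightarrow> 'w \<Rightarrow> real) \<Rightarrow> real \<Rightarrow> (real \<Rightarrow> real) \<Rightarrow> 'w \<Rightarrow> real" where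
  "wiener_integral M B T \<phi> = (SOME X. X \<in> borel_measurable M \<and>
     (\<lambda>k. \<integral>\<^sup>+ w. ennreal ((riemann_sum B T \<phi> k w - X w)^2) \<partial>M) \<longlonglongrightarrow> 0)"

definition covariance :: "'w measure \<Rightarrow> ('w \<Rightarrow> real) \<Rightarrow> ('w \<Rightarrow> real) \<Rightarrow> real" where
  "covariance M X Y =
     integral\<^sup>L M (\<lambda>w. (X w - integral\<^sup>L M X) * (Y w - integral\<^sup>L M Y))"

definition u_coef ::
  "'w measure \<Rightarrow> (real \<Rightarrow> 'w \<Rightarrow> real) \<Rightarrow> real \<Rightarrow> real \<Rightarrow> (real \<Rightarrow> real) \<Rightarrow> (real \<Rightarrow> real)
    \<Rightarrow> (real \<Rightarrow> real) \<Rightarrow> (real \<Rightarrow> real) \<Rightarrow> nat \<Rightarrow> 'w \<Rightarrow> real" where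
  "u_coef M B R0 T a h f g n w =
     coef R0 f n *
       (LINT \<tau>:{0..T}|lborel. h \<tau> * exp (- lam R0 n * (LINT s:{\<tau>..T}|lborel. a s)))
     + coef R0 g n *
       wiener_integral M B T (\<lambda>\<tau>. exp (- lam R0 n * (LINT s:{\<tau>..T}|lborel. a s))) w"

end

theory Submission
  imports Defs
begin

lemma int_bdd_mult:
  fixes E g :: "real \<Rightarrow> real"
  assumes E: "integrable lborel E" and g: "g \<in> borel_measurable borel"
    and b: "\<And>x. E x \<noteq> 0 \<Longrightarrow> \<bar>g x\<bar> \<le> K"
  shows "integrable lborel (\<lambda>x. E x * g x)"
proof (rule Bochner_Integration.integrable_bound[where f="\<lambda>x. \<bar>K\<bar> * E x"])
  show "integrable lborel (\<lambda>x. \<bar>K\<bar> * E x)" using E by simp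
  show "(\<lambda>x. E x * g x) \<in> borel_measurable lborel" using E g by measurable
  show "AE x in lborel. norm (E x * g x) \<le> norm (\<bar>K\<bar> * E x)"
  proof (rule AE_I2)
    fix x show "norm (E x * g x) \<le> norm (\<bar>K\<bar> * E x)"
    proof (cases "E x = 0")
      case False
      then have "\<bar>g x\<bar> \<le> \<bar>K\<bar>" using b by force
      then show ?thesis using mult_left_mono[OF \<open>\<bar>g x\<bar> \<le> \<bar>K\<bar>\<close>, of "\<bar>E x\<bar>"]
        by (simp add: abs_mult mult.commute)
    qed simp
  qed
qed

lemma C1:
  fixes E :: "real \<Rightarrow> real"
  assumes E: "integrable lborel E"
  and z: "\<And>n. n \<ge> 1 \<Longrightarrow> (\<integral>x. E x * sin (real n * (pi*x/R0)) \<partial>lborel) = 0"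
  shows "(\<integral>x. E x * (cos (pi*x/R0) ^ k * sin (real n * (pi*x/R0))) \<partial>lborel) = 0"
proof (induction k arbitrary: n)
  case 0 show ?case
  proof (cases "n = 0")
    case False then show ?thesis using z[of n] by simp
  qed simp
next
  case (Suc k)
  show ?case
  proof (cases n)
    case 0 then show ?thesis by simp
  next
    case (Suc m)
    have id: "cos t ^ Suc k * sin (real (Suc m) * t) =
       (cos t ^ k * sin (real (Suc (Suc m)) * t) + cos t ^ k * sin (real m * t)) / 2" for t
    proof -
      have "sin (real (Suc (Suc m)) * t) + sin (real m * t) = 2 * sin (real (Suc m) * t) * cos t"
      proof -
        have a: "real (Suc (Suc m)) * t = real (Suc m) * t + t" and b: "real m * t = real (Suc m) * t - t"
          by (simp_all add: algebra_simps)
        show ?thesis unfolding a b sin_add sin_diff by simp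
      qed
      then have "cos t ^ k * sin (real (Suc (Suc m)) * t) + cos t ^ k * sin (real m * t)
          = cos t ^ k * (2 * sin (real (Suc m) * t) * cos t)"
        by (simp only: distrib_left[symmetric])
      then show ?thesis by simp
    qed
    have i1: "integrable lborel (\<lambda>x. E x * (cos (pi*x/R0) ^ k * sin (real j * (pi*x/R0))))" for j
      by (rule int_bdd_mult[OF E, where K=1]) (auto simp: abs_mult power_abs intro!: mult_le_one power_le_one)
    have "(\<integral>x. E x * (cos (pi*x/R0) ^ Suc k * sin (real n * (pi*x/R0))) \<partial>lborel)
       = (\<integral>x. (E x * (cos (pi*x/R0) ^ k * sin (real (Suc (Suc m)) * (pi*x/R0))) +
              E x * (cos (pi*x/R0) ^ k * sin (real m * (pi*x/R0)))) / 2 \<partial>lborel)"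
      unfolding Suc id by (simp add: algebra_simps add_divide_distrib)
    also have "\<dots> = ((\<integral>x. E x * (cos (pi*x/R0) ^ k * sin (real (Suc (Suc m)) * (pi*x/R0))) \<partial>lborel) +
              (\<integral>x. E x * (cos (pi*x/R0) ^ k * sin (real m * (pi*x/R0))) \<partial>lborel)) / 2"
      by (simp only: integral_divide_zero Bochner_Integration.integral_add[OF i1 i1])
    also have "\<dots> = 0" by (simp only: Suc.IH) simp
    finally show ?thesis .
  qed
qed

lemma C2:
  fixes E :: "real \<Rightarrow> real"
  assumes E: "integrable lborel E"
  and z: "\<And>n. n \<ge> 1 \<Longrightarrow> (\<integral>x. E x * sin (real n * (pi*x/R0)) \<partial>lborel) = 0"
  shows "(\<integral>x. E x * sin (pi*x/R0) * (\<Sum>i\<le>N. a i * cos (pi*x/R0) ^ i) \<partial>lborel) = 0"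
proof -
  have i1: "integrable lborel (\<lambda>x. E x * (cos (pi*x/R0) ^ k * sin (real 1 * (pi*x/R0))))" for k
    by (rule int_bdd_mult[OF E, where K=1]) (auto simp: abs_mult power_abs intro!: mult_le_one power_le_one)
  have "(\<integral>x. E x * sin (pi*x/R0) * (\<Sum>i\<le>N. a i * cos (pi*x/R0) ^ i) \<partial>lborel)
     = (\<integral>x. (\<Sum>i\<le>N. a i * (E x * (cos (pi*x/R0) ^ i * sin (real 1 * (pi*x/R0))))) \<partial>lborel)"
    by (simp add: sum_distrib_left algebra_simps)
  also have "\<dots> = (\<Sum>i\<le>N. a i * (\<integral>x. E x * (cos (pi*x/R0) ^ i * sin (real 1 * (pi*x/R0))) \<partial>lborel))"
    using i1 by (simp add: integral_sum)
  also have "\<dots> = 0"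
  proof -
    have "\<And>i. (\<integral>x. E x * (cos (pi*x/R0) ^ i * sin (real 1 * (pi*x/R0))) \<partial>lborel) = 0"
      by (rule C1[OF E z])
    then show ?thesis by (simp only:) simp
  qed
  finally show ?thesis .
qed

lemma sin_mult_bound: "\<bar>y\<bar> \<le> K \<Longrightarrow> \<bar>sin t * y\<bar> \<le> (K::real)"
proof -
  assume a: "\<bar>y\<bar> \<le> K"
  have "\<bar>sin t\<bar> * \<bar>y\<bar> \<le> 1 * \<bar>y\<bar>" by (rule mult_right_mono) auto
  then show ?thesis using a by (simp add: abs_mult)
qed

lemma C3:
  fixes E q :: "real \<Rightarrow> real"
  assumes R0: "R0 > 0" and E: "integrable lborel E" and Ez: "\<And>x. x \<notin> {0..R0} \<Longrightarrow> E x = 0"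
  and z: "\<And>n. n \<ge> 1 \<Longrightarrow> (\<integral>x. E x * sin (real n * (pi*x/R0)) \<partial>lborel) = 0"
  and q: "continuous_on UNIV q"
  shows "(\<integral>x. E x * (sin (pi*x/R0) * q x) \<partial>lborel) = 0"
proof -
  have "bounded (q ` {0..R0})"
    by (intro compact_imp_bounded compact_continuous_image continuous_on_subset[OF q]) auto
  then obtain Kq where Kq: "\<And>x. x \<in> {0..R0} \<Longrightarrow> \<bar>q x\<bar> \<le> Kq"
    unfolding bounded_real by blast
  have mq[measurable]: "q \<in> borel_measurable borel" by (rule borel_measurable_continuous_onI[OF q])
  define g where "g y = q (R0/pi * arccos y)" for y
  have gc: "continuous_on {-1..1} g" unfolding g_def
    by (intro continuous_on_compose2[OF q] continuous_intros) auto
  have qg: "q x = g (cos (pi*x/R0))" if "x \<in> {0..R0}" for x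
  proof -
    have "0 \<le> pi*x/R0" "pi*x/R0 \<le> pi" using that R0 by (auto simp: field_simps)
    then have "arccos (cos (pi*x/R0)) = pi*x/R0" by (rule arccos_cos)
    then show ?thesis unfolding g_def using R0 by simp
  qed
  define I where "I = (\<integral>x. E x * (sin (pi*x/R0) * q x) \<partial>lborel)"
  have int1: "integrable lborel (\<lambda>x. E x * (sin (pi*x/R0) * q x))"
  proof (rule int_bdd_mult[OF E, where K=Kq])
    fix x assume "E x \<noteq> 0"
    then have "x \<in> {0..R0}" using Ez by blast
    then show "\<bar>sin (pi*x/R0) * q x\<bar> \<le> Kq" using Kq[of x]
      by (intro sin_mult_bound) auto
  qed measurable
  have key: "\<bar>I\<bar> \<le> \<epsilon> * (\<integral>x. \<bar>E x\<bar> \<partial>lborel)" if ep: "\<epsilon> > 0" for \<epsilon>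
  proof -
    obtain P where P: "real_polynomial_function P" "\<And>y. y \<in> {-1..1} \<Longrightarrow> \<bar>g y - P y\<bar> < \<epsilon>"
      using Stone_Weierstrass_real_polynomial_function[OF compact_Icc gc ep] by blast
    obtain a N where PN: "P = (\<lambda>y. \<Sum>i\<le>N. a i * y^i)"
      using P(1) real_polynomial_function_iff_sum by blast
    let ?p = "\<lambda>x. \<Sum>i\<le>N. a i * cos (pi*x/R0) ^ i"
    have int2: "integrable lborel (\<lambda>x. E x * (sin (pi*x/R0) * ?p x))"
    proof (rule int_bdd_mult[OF E, where K="\<Sum>i\<le>N. \<bar>a i\<bar>"])
      fix x
      have "\<bar>?p x\<bar> \<le> (\<Sum>i\<le>N. \<bar>a i * cos (pi*x/R0) ^ i\<bar>)" by (rule sum_abs)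
      also have "\<dots> \<le> (\<Sum>i\<le>N. \<bar>a i\<bar>)"
        by (intro sum_mono) (simp add: abs_mult power_abs mult_left_le power_le_one)
      finally show "\<bar>sin (pi*x/R0) * ?p x\<bar> \<le> (\<Sum>i\<le>N. \<bar>a i\<bar>)"
        by (rule sin_mult_bound)
    qed measurable
    have z2: "(\<integral>x. E x * (sin (pi*x/R0) * ?p x) \<partial>lborel) = 0"
      using C2[OF E z, where N=N and a=a] by (simp add: mult.assoc)
    have "I = (\<integral>x. E x * (sin (pi*x/R0) * q x) - E x * (sin (pi*x/R0) * ?p x) \<partial>lborel)"
      unfolding I_def using int1 int2 z2 by simp
    also have "\<dots> = (\<integral>x. E x * (sin (pi*x/R0) * (q x - ?p x)) \<partial>lborel)"
      by (simp add: algebra_simps)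
    finally have I2: "I = \<dots>" .
    have int3: "integrable lborel (\<lambda>x. E x * (sin (pi*x/R0) * (q x - ?p x)))"
      using Bochner_Integration.integrable_diff[OF int1 int2] by (simp add: algebra_simps)
    have "\<bar>I\<bar> \<le> (\<integral>x. norm (E x * (sin (pi*x/R0) * (q x - ?p x))) \<partial>lborel)"
      unfolding I2 using integral_norm_bound[of lborel "\<lambda>x. E x * (sin (pi*x/R0) * (q x - ?p x))"]
      by (simp only: real_norm_def)
    also have "\<dots> \<le> (\<integral>x. \<epsilon> * \<bar>E x\<bar> \<partial>lborel)"
    proof (rule integral_mono)
      show "integrable lborel (\<lambda>x. norm (E x * (sin (pi*x/R0) * (q x - ?p x))))"
        using int3 by simp
      show "integrable lborel (\<lambda>x. \<epsilon> * \<bar>E x\<bar>)" using E by simp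
      fix x show "norm (E x * (sin (pi*x/R0) * (q x - ?p x))) \<le> \<epsilon> * \<bar>E x\<bar>"
      proof (cases "x \<in> {0..R0}")
        case True
        have c: "cos (pi*x/R0) \<in> {-1..1}" by simp
        have "\<bar>q x - ?p x\<bar> \<le> \<epsilon>" using P(2)[OF c] qg[OF True] PN by simp
        then have "\<bar>sin (pi*x/R0) * (q x - ?p x)\<bar> \<le> \<epsilon>"
          by (rule sin_mult_bound)
        then have "\<bar>E x\<bar> * \<bar>sin (pi*x/R0) * (q x - ?p x)\<bar> \<le> \<bar>E x\<bar> * \<epsilon>"
          by (rule mult_left_mono) simp
        then show ?thesis by (simp add: abs_mult mult.commute)
      next
        case False then show ?thesis using Ez by simp
      qed
    qed
    finally show ?thesis by simp
  qed
  have "I = 0"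
  proof (rule ccontr)
    assume "I \<noteq> 0"
    define A where "A = (\<integral>x. \<bar>E x\<bar> \<partial>lborel)"
    have A0: "A \<ge> 0" unfolding A_def by simp
    have "\<bar>I\<bar> \<le> (\<bar>I\<bar> / (2*(A+1))) * A" using key[of "\<bar>I\<bar> / (2*(A+1))"] \<open>I \<noteq> 0\<close> A0
      unfolding A_def by simp
    also have "\<dots> = \<bar>I\<bar> * (A / (2*(A+1)))" by simp
    also have "\<dots> < \<bar>I\<bar> * 1"
    proof (rule mult_strict_left_mono)
      show "A / (2*(A+1)) < 1" using A0 by (simp add: pos_divide_less_eq)
    qed (use \<open>I \<noteq> 0\<close> in simp)
    finally show False by simp
  qed
  then show ?thesis unfolding I_def .
qed

lemma C4:
  fixes E :: "real \<Rightarrow> real"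
  assumes R0: "R0 > 0" and E: "integrable lborel E" and Ez: "\<And>x. x \<notin> {0..R0} \<Longrightarrow> E x = 0"
  and z: "\<And>n. n \<ge> 1 \<Longrightarrow> (\<integral>x. E x * sin (real n * (pi*x/R0)) \<partial>lborel) = 0"
  shows "(\<integral>x. E x * (sin (pi*x/R0) * indicator {c<..} x) \<partial>lborel) = 0"
proof -
  define qj where "qj j x = max 0 (min 1 (real j * (x - c)))" for j :: nat and x :: real
  have qc: "continuous_on UNIV (qj j)" for j unfolding qj_def by (intro continuous_intros)
  have z0: "(\<integral>x. E x * (sin (pi*x/R0) * qj j x) \<partial>lborel) = 0" for j
    by (rule C3[OF R0 E Ez z qc])
  have "(\<lambda>j. \<integral>x. E x * (sin (pi*x/R0) * qj j x) \<partial>lborel) \<longlonglongrightarrow>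
        (\<integral>x. E x * (sin (pi*x/R0) * indicator {c<..} x) \<partial>lborel)"
  proof (rule integral_dominated_convergence[where w="\<lambda>x. \<bar>E x\<bar>"])
    show "(\<lambda>x. E x * (sin (pi*x/R0) * indicator {c<..} x)) \<in> borel_measurable lborel"
      using E by measurable
    show "(\<lambda>x. E x * (sin (pi*x/R0) * qj j x)) \<in> borel_measurable lborel" for j
      using E borel_measurable_continuous_onI[OF qc[of j]] by measurable
    show "integrable lborel (\<lambda>x. \<bar>E x\<bar>)" using E by simp
    show "AE x in lborel. norm (E x * (sin (pi*x/R0) * qj j x)) \<le> \<bar>E x\<bar>" for j
    proof (rule AE_I2)
      fix x
      have "\<bar>qj j x\<bar> \<le> 1" unfolding qj_def by simp
      then have "\<bar>sin (pi*x/R0) * qj j x\<bar> \<le> 1" by (rule sin_mult_bound)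
      then have "\<bar>E x\<bar> * \<bar>sin (pi*x/R0) * qj j x\<bar> \<le> \<bar>E x\<bar> * 1"
        by (rule mult_left_mono) simp
      then show "norm (E x * (sin (pi*x/R0) * qj j x)) \<le> \<bar>E x\<bar>" by (simp add: abs_mult)
    qed
    show "AE x in lborel. (\<lambda>j. E x * (sin (pi*x/R0) * qj j x)) \<longlonglongrightarrow> E x * (sin (pi*x/R0) * indicator {c<..} x)"
    proof (rule AE_I2)
      fix x
      have "eventually (\<lambda>j. qj j x = indicator {c<..} x) sequentially"
      proof (cases "x \<le> c")
        case True
        show ?thesis
        proof (intro always_eventually allI)
          fix j
          have "real j * (x - c) \<le> 0" using True by (simp add: mult_nonneg_nonpos)
          then show "qj j x = indicator {c<..} x" using True unfolding qj_def
            by (simp add: indicator_def max_def min_def)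
        qed
      next
        case False
        then obtain N where N: "1 < real N * (x - c)" using reals_Archimedean3[of "x - c"] by auto
        show ?thesis unfolding eventually_sequentially
        proof (intro exI allI impI)
          fix j assume "N \<le> j"
          then have "real N * (x - c) \<le> real j * (x - c)" using False by (intro mult_right_mono) auto
          then have "1 < real j * (x - c)" using N by linarith
          then show "qj j x = indicator {c<..} x" using False unfolding qj_def
            by (simp add: indicator_def max_def min_def)
        qed
      qed
      then have "eventually (\<lambda>j. E x * (sin (pi*x/R0) * qj j x) = E x * (sin (pi*x/R0) * indicator {c<..} x)) sequentially"
        by eventually_elim simp
      then show "(\<lambda>j. E x * (sin (pi*x/R0) * qj j x)) \<longlonglongrightarrow> E x * (sin (pi*x/R0) * indicator {c<..} x)"
        by (rule tendsto_eventually)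
    qed
  qed
  then have "(\<lambda>j. 0::real) \<longlonglongrightarrow> (\<integral>x. E x * (sin (pi*x/R0) * indicator {c<..} x) \<partial>lborel)"
    by (simp add: z0)
  from LIMSEQ_unique[OF tendsto_const this] show ?thesis by simp
qed

lemma C5:
  fixes W :: "real \<Rightarrow> real"
  assumes W: "integrable lborel W"
    and z: "\<And>c. (\<integral>x. W x * indicator {c<..} x \<partial>lborel) = 0"
  shows "AE x in lborel. W x = 0"
proof -
  define P where "P x = max 0 (W x)" for x
  define N where "N x = max 0 (- W x)" for x
  have WPN: "W x = P x - N x" for x unfolding P_def N_def by auto
  have [measurable]: "W \<in> borel_measurable lborel" using W by simp
  have [measurable]: "P \<in> borel_measurable lborel" "N \<in> borel_measurable lborel"
    unfolding P_def N_def by measurable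
  have iP: "integrable lborel P" unfolding P_def using W by simp
  have iN: "integrable lborel N" unfolding N_def using W by simp
  have iPA: "integrable lborel (\<lambda>x. P x * indicator A x)" if "A \<in> sets borel" for A
    using that iP by (intro integrable_real_mult_indicator) auto
  have iNA: "integrable lborel (\<lambda>x. N x * indicator A x)" if "A \<in> sets borel" for A
    using that iN by (intro integrable_real_mult_indicator) auto
  have em: "emeasure (density lborel (\<lambda>x. ennreal (F x))) A = ennreal (\<integral>x. F x * indicator A x \<partial>lborel)"
    if "A \<in> sets borel" "integrable lborel (\<lambda>x. F x * indicator A x)" "\<And>x. F x \<ge> 0"
      "F \<in> borel_measurable lborel" for F A
  proof -
    have "emeasure (density lborel (\<lambda>x. ennreal (F x))) A = (\<integral>\<^sup>+x. ennreal (F x) * indicator A x \<partial>lborel)"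
      using that by (subst emeasure_density) auto
    also have "\<dots> = (\<integral>\<^sup>+x. ennreal (F x * indicator A x) \<partial>lborel)"
      by (intro nn_integral_cong) (auto simp: indicator_def)
    also have "\<dots> = ennreal (\<integral>x. F x * indicator A x \<partial>lborel)"
      using that by (intro nn_integral_eq_integral) auto
    finally show ?thesis .
  qed
  have eqm: "density lborel (\<lambda>x. ennreal (P x)) = density lborel (\<lambda>x. ennreal (N x))"
  proof (rule measure_eqI_lessThan)
    show "sets (density lborel (\<lambda>x. ennreal (P x))) = sets borel" by simp
    show "sets (density lborel (\<lambda>x. ennreal (N x))) = sets borel" by simp
    fix c :: real
    show "emeasure (density lborel (\<lambda>x. ennreal (P x))) {c<..} < \<infinity>"
      using em[of "{c<..}" P] iPA[of "{c<..}"] by (simp add: P_def)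
    have "(\<integral>x. P x * indicator {c<..} x \<partial>lborel) - (\<integral>x. N x * indicator {c<..} x \<partial>lborel)
        = (\<integral>x. W x * indicator {c<..} x \<partial>lborel)"
      using iPA[of "{c<..}"] iNA[of "{c<..}"] by (simp add: WPN algebra_simps)
    then have "(\<integral>x. P x * indicator {c<..} x \<partial>lborel) = (\<integral>x. N x * indicator {c<..} x \<partial>lborel)"
      using z[of c] by simp
    then show "emeasure (density lborel (\<lambda>x. ennreal (P x))) {c<..} = emeasure (density lborel (\<lambda>x. ennreal (N x))) {c<..}"
      using em[of "{c<..}" P] em[of "{c<..}" N] iPA[of "{c<..}"] iNA[of "{c<..}"]
      by (simp add: P_def N_def)
  qed
  have "AE x in lborel. ennreal (P x) = ennreal (N x)"
    by (rule sigma_finite_measure.density_unique[OF sigma_finite_lborel _ _ eqm]) auto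
  then show ?thesis
  proof (rule AE_mp[OF _ AE_I2], intro impI)
    fix x assume "ennreal (P x) = ennreal (N x)"
    moreover have "P x \<ge> 0" "N x \<ge> 0" unfolding P_def N_def by simp_all
    ultimately have "P x = N x" using ennreal_inj by blast
    then show "W x = 0" unfolding P_def N_def by (auto simp: max_def split: if_splits)
  qed
qed

lemma complete_sin:
  fixes e :: "real \<Rightarrow> real"
  assumes R0: "R0 > 0" and e: "set_integrable lborel {0..R0} e"
  and z: "\<And>n. n \<ge> 1 \<Longrightarrow> (LINT x:{0..R0}|lborel. e x * sin (real n * (pi*x/R0))) = 0"
  shows "AE x in lborel. x \<in> {0..R0} \<longrightarrow> e x = 0"
proof -
  define E where "E x = indicator {0..R0} x * e x" for x
  have E: "integrable lborel E" using e unfolding set_integrable_def E_def by simp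
  have Ez: "\<And>x. x \<notin> {0..R0} \<Longrightarrow> E x = 0" unfolding E_def by simp
  have z': "(\<integral>x. E x * sin (real n * (pi*x/R0)) \<partial>lborel) = 0" if "n \<ge> 1" for n
    using z[OF that] unfolding set_lebesgue_integral_def E_def by (simp add: mult.assoc)
  define W where "W x = E x * sin (pi*x/R0)" for x
  have W: "integrable lborel W" unfolding W_def
    by (rule int_bdd_mult[OF E, where K=1]) auto
  have "AE x in lborel. W x = 0"
  proof (rule C5[OF W])
    fix c show "(\<integral>x. W x * indicator {c<..} x \<partial>lborel) = 0"
      using C4[OF R0 E Ez z', of c] unfolding W_def by (simp add: mult.assoc)
  qed
  moreover have "AE x in lborel. x \<noteq> 0" "AE x in lborel. x \<noteq> R0" by (rule AE_lborel_singleton)+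
  ultimately show ?thesis
  proof eventually_elim
    case (elim x)
    show ?case
    proof
      assume x: "x \<in> {0..R0}"
      then have "0 < x" "x < R0" using elim by auto
      then have "0 < pi*x/R0" "pi*x/R0 < pi" using R0 by (auto simp: field_simps)
      then have "sin (pi*x/R0) > 0" by (rule sin_gt_zero)
      then show "e x = 0" using elim x unfolding W_def E_def by simp
    qed
  qed
qed

lemma two_abs_le: "2 * \<bar>y\<bar> \<le> y^2 + (1::real)"
proof -
  have "0 \<le> (\<bar>y\<bar> - 1)^2" by simp
  then show ?thesis by (simp add: power2_eq_square algebra_simps abs_mult_self_eq)
qed

lemma sbm_mult:
  fixes f g :: "real \<Rightarrow> real"
  assumes "set_borel_measurable lborel A f" "g \<in> borel_measurable borel"
  shows "set_borel_measurable lborel A (\<lambda>x. f x * g x)"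
    and "set_borel_measurable lborel A (\<lambda>x. g x * f x)"
proof -
  have 1: "(\<lambda>x. indicator A x *\<^sub>R f x) \<in> borel_measurable lborel"
    using assms(1) unfolding set_borel_measurable_def .
  have 2: "g \<in> borel_measurable lborel" using assms(2) by simp
  have "(\<lambda>x. indicator A x *\<^sub>R (f x * g x)) = (\<lambda>x. (indicator A x *\<^sub>R f x) * g x)"
    by (simp add: fun_eq_iff)
  then show "set_borel_measurable lborel A (\<lambda>x. f x * g x)"
    unfolding set_borel_measurable_def using borel_measurable_times[OF 1 2] by simp
  then show "set_borel_measurable lborel A (\<lambda>x. g x * f x)" by (simp add: mult.commute)
qed

lemma L2r_rf:
  assumes f: "L2r R0 f"
  shows "set_integrable lborel {0..R0} (\<lambda>r. r * f r)"
proof (rule set_integrable_bound[where f="\<lambda>r. r^2 * (f r)^2 + 1"])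
  have [measurable]: "(\<lambda>x. indicator {0..R0} x *\<^sub>R f x) \<in> borel_measurable lborel"
    using f unfolding L2r_def set_borel_measurable_def by simp
  have i1: "set_integrable lborel {0..R0} (\<lambda>r. r^2 * (f r)^2)" using f unfolding L2r_def by simp
  have i2: "set_integrable lborel {0..R0} (\<lambda>r. 1::real)"
    unfolding set_integrable_def by (simp, intro integrable_real_indicator) (auto simp: emeasure_lborel_Icc_eq)
  show "set_integrable lborel {0..R0} (\<lambda>r. r^2 * (f r)^2 + 1)"
    using set_integral_add(1)[OF i1 i2] .
  show "set_borel_measurable lborel {0..R0} (\<lambda>r. r * f r)"
    using f unfolding L2r_def by (intro sbm_mult(2)) auto
  show "AE x in lborel. x \<in> {0..R0} \<longrightarrow> norm (x * f x) \<le> norm (x^2 * (f x)^2 + 1)"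
  proof (rule AE_I2, intro impI)
    fix x
    have "2 * \<bar>x * f x\<bar> \<le> (x * f x)^2 + 1" by (rule two_abs_le)
    then show "norm (x * f x) \<le> norm (x^2 * (f x)^2 + 1)"
      by (simp add: power_mult_distrib)
  qed
qed

lemma sinmult_int:
  assumes e: "set_integrable lborel {0..R0} e"
  shows "set_integrable lborel {0..R0} (\<lambda>r. e r * sin (real n * (pi*r/R0)))"
proof (rule set_integrable_bound[OF e])
  have "set_borel_measurable lborel {0..R0} e"
    using e unfolding set_integrable_def set_borel_measurable_def by (rule borel_measurable_integrable)
  then show "set_borel_measurable lborel {0..R0} (\<lambda>r. e r * sin (real n * (pi*r/R0)))"
    by (rule sbm_mult(1)) simp
  show "AE x in lborel. x \<in> {0..R0} \<longrightarrow> norm (e x * sin (real n * (pi*x/R0))) \<le> norm (e x)"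
  proof (rule AE_I2, intro impI)
    fix x
    have "\<bar>e x\<bar> * \<bar>sin (real n * (pi*x/R0))\<bar> \<le> \<bar>e x\<bar> * 1"
      by (rule mult_left_mono) auto
    then show "norm (e x * sin (real n * (pi*x/R0))) \<le> norm (e x)" by (simp add: abs_mult)
  qed
qed

lemma coef_sin:
  assumes R0: "R0 > 0" and n: "n \<ge> 1"
  shows "coef R0 f n = sqrt 2 * R0 / sqrt (R0^3) * (LINT r:{0..R0}|lborel. r * f r * sin (real n * (pi*r/R0)))"
proof -
  have "r^2 * f r * omega R0 n r = sqrt 2 * R0 / sqrt (R0^3) * (r * f r * sin (real n * (pi*r/R0)))" for r
  proof (cases "r = 0")
    case False
    have nz: "real n * pi * r / R0 \<noteq> 0" using False n R0 by simp
    have "omega R0 n r = sqrt 2 * (real n * pi) / sqrt (R0^3) * (sin (real n * pi * r / R0) / (real n * pi * r / R0))"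
      unfolding omega_def Let_def using nz by simp
    then show ?thesis using False n R0 by (simp add: field_simps power2_eq_square)
  qed simp
  then show ?thesis unfolding coef_def by simp
qed

lemma coef_eq_imp:
  assumes R0: "R0 > 0" and f: "L2r R0 f" and g: "L2r R0 g"
    and eq: "\<And>n. n \<ge> 1 \<Longrightarrow> coef R0 f n = s * coef R0 g n"
  shows "AE r in lborel. r \<in> {0..R0} \<longrightarrow> f r = s * g r"
proof -
  define e where "e r = r * f r - s * (r * g r)" for r
  have ef: "set_integrable lborel {0..R0} (\<lambda>r. r * f r)" by (rule L2r_rf[OF f])
  have eg: "set_integrable lborel {0..R0} (\<lambda>r. r * g r)" by (rule L2r_rf[OF g])
  have e: "set_integrable lborel {0..R0} e" unfolding e_def
    using set_integral_diff(1)[OF ef set_integrable_mult_right[OF eg, of s]] by simp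
  have "AE x in lborel. x \<in> {0..R0} \<longrightarrow> e x = 0"
  proof (rule complete_sin[OF R0 e])
    fix n :: nat assume n: "n \<ge> 1"
    have k: "sqrt 2 * R0 / sqrt (R0^3) \<noteq> 0" using R0 by simp
    have i1: "set_integrable lborel {0..R0} (\<lambda>r. r * f r * sin (real n * (pi*r/R0)))"
      by (rule sinmult_int[OF ef])
    have i2: "set_integrable lborel {0..R0} (\<lambda>r. s * (r * g r * sin (real n * (pi*r/R0))))"
      by (rule set_integrable_mult_right, rule sinmult_int[OF eg])
    have "(LINT r:{0..R0}|lborel. r * f r * sin (real n * (pi*r/R0))) =
          s * (LINT r:{0..R0}|lborel. r * g r * sin (real n * (pi*r/R0)))"
      using eq[OF n] unfolding coef_sin[OF R0 n] using k by simp
    then have "(LINT r:{0..R0}|lborel. r * f r * sin (real n * (pi*r/R0)) - s * (r * g r * sin (real n * (pi*r/R0)))) = 0"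
      unfolding set_integral_diff(2)[OF i1 i2] by simp
    then show "(LINT x:{0..R0}|lborel. e x * sin (real n * (pi*x/R0))) = 0"
      unfolding e_def by (simp add: algebra_simps)
  qed
  moreover have "AE x in lborel. x \<noteq> 0" by (rule AE_lborel_singleton)
  ultimately show ?thesis
    by eventually_elim (auto simp: e_def algebra_simps)
qed

definition L2 :: "'w measure \<Rightarrow> ('w \<Rightarrow> real) \<Rightarrow> bool" where
  "L2 M X \<longleftrightarrow> X \<in> borel_measurable M \<and> integrable M (\<lambda>w. (X w)^2)"

definition nrm :: "'w measure \<Rightarrow> ('w \<Rightarrow> real) \<Rightarrow> real" where
  "nrm M X = sqrt (\<integral>w. (X w)^2 \<partial>M)"

lemma two_abs_mult_le: "2 * \<bar>x * y\<bar> \<le> x^2 + (y::real)^2"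
proof -
  have "0 \<le> (\<bar>x\<bar> - \<bar>y\<bar>)^2" by simp
  then show ?thesis by (simp add: power2_eq_square algebra_simps abs_mult)
qed

context prob_space
begin

lemma L2_mult_int:
  assumes "L2 M X" "L2 M Y" shows "integrable M (\<lambda>w. X w * Y w)"
proof (rule Bochner_Integration.integrable_bound[where f="\<lambda>w. (X w)^2 + (Y w)^2"])
  show "integrable M (\<lambda>w. (X w)^2 + (Y w)^2)" using assms unfolding L2_def by simp
  show "(\<lambda>w. X w * Y w) \<in> borel_measurable M" using assms unfolding L2_def
    by (intro borel_measurable_times) auto
  show "AE w in M. norm (X w * Y w) \<le> norm ((X w)^2 + (Y w)^2)"
  proof (intro AE_I2)
    fix w
    have "2 * \<bar>X w * Y w\<bar> \<le> (X w)^2 + (Y w)^2" by (rule two_abs_mult_le)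
    moreover have "0 \<le> (X w)^2 + (Y w)^2" by simp
    ultimately show "norm (X w * Y w) \<le> norm ((X w)^2 + (Y w)^2)" by simp
  qed
qed

lemma L2_int: assumes "L2 M X" shows "integrable M X"
proof (rule square_integrable_imp_integrable)
  show "X \<in> borel_measurable M" using assms unfolding L2_def by blast
  show "integrable M (\<lambda>x. (X x)^2)" using assms unfolding L2_def by blast
qed

lemma L2_const: "L2 M (\<lambda>w. c)"
  unfolding L2_def by simp

lemma L2_add: assumes "L2 M X" "L2 M Y" shows "L2 M (\<lambda>w. X w + Y w)"
proof -
  have "integrable M (\<lambda>w. (X w)^2 + 2 * (X w * Y w) + (Y w)^2)"
    using assms L2_mult_int[OF assms] unfolding L2_def by simp
  moreover have "(\<lambda>w. X w + Y w) \<in> borel_measurable M" using assms unfolding L2_def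
    by (intro borel_measurable_add) auto
  ultimately show ?thesis unfolding L2_def by (simp add: power2_sum algebra_simps)
qed

lemma L2_cmult: assumes "L2 M X" shows "L2 M (\<lambda>w. c * X w)"
proof -
  have "(\<lambda>w. c * X w) \<in> borel_measurable M" using assms unfolding L2_def
    by (intro borel_measurable_times) auto
  then show ?thesis using assms unfolding L2_def by (simp add: power_mult_distrib)
qed

lemma L2_uminus: assumes "L2 M X" shows "L2 M (\<lambda>w. - X w)"
  using L2_cmult[OF assms, of "-1"] by simp

lemma L2_diff: assumes "L2 M X" "L2 M Y" shows "L2 M (\<lambda>w. X w - Y w)"
  using L2_add[OF assms(1) L2_uminus[OF assms(2)]] by simp

lemma L2_sum: assumes "finite I" "\<And>i. i \<in> I \<Longrightarrow> L2 M (X i)" shows "L2 M (\<lambda>w. \<Sum>i\<in>I. X i w)"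
  using assms
proof (induction I rule: finite_induct)
  case empty then show ?case using L2_const[of 0] by simp
next
  case (insert x F) then show ?case by (simp add: L2_add)
qed

lemma sq_expand:
  assumes "L2 M X" "L2 M Y"
  shows "(\<integral>w. (X w + t * Y w)^2 \<partial>M) = (\<integral>w. (X w)^2 \<partial>M) + 2 * t * (\<integral>w. X w * Y w \<partial>M) + t^2 * (\<integral>w. (Y w)^2 \<partial>M)"
proof -
  have i1: "integrable M (\<lambda>w. (X w)^2)" "integrable M (\<lambda>w. (Y w)^2)" using assms unfolding L2_def by auto
  have i2: "integrable M (\<lambda>w. X w * Y w)" by (rule L2_mult_int[OF assms])
  have "(\<lambda>w. (X w + t * Y w)^2) = (\<lambda>w. (X w)^2 + (2 * t) * (X w * Y w) + t^2 * (Y w)^2)"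
    by (simp add: fun_eq_iff power2_eq_square algebra_simps)
  then show ?thesis using i1 i2 by simp
qed

lemma CS:
  assumes X: "L2 M X" and Y: "L2 M Y"
  shows "\<bar>\<integral>w. X w * Y w \<partial>M\<bar> \<le> nrm M X * nrm M Y"
proof -
  define a where "a = (\<integral>w. (X w)^2 \<partial>M)"
  define b where "b = (\<integral>w. (Y w)^2 \<partial>M)"
  define c where "c = (\<integral>w. X w * Y w \<partial>M)"
  have q: "0 \<le> a + 2 * t * c + t^2 * b" for t
  proof -
    have "0 \<le> (\<integral>w. (X w + t * Y w)^2 \<partial>M)" by (rule Bochner_Integration.integral_nonneg) simp
    then show ?thesis unfolding sq_expand[OF X Y, of t] a_def b_def c_def .
  qed
  have a0: "a \<ge> 0" "b \<ge> 0" unfolding a_def b_def by simp_all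
  have "c^2 \<le> a * b"
  proof (cases "b = 0")
    case True
    have "c = 0"
    proof (rule ccontr)
      assume "c \<noteq> 0"
      then have "0 \<le> a + 2 * (- (a+1) / (2*c)) * c" using q[of "- (a+1) / (2*c)"] True by simp
      also have "\<dots> = -1" using \<open>c \<noteq> 0\<close> by (simp add: field_simps)
      finally show False by simp
    qed
    then show ?thesis using True by simp
  next
    case False
    then have b: "b > 0" using a0 by simp
    have "0 \<le> a + 2 * (- c / b) * c + (- c / b)^2 * b" by (rule q)
    also have "\<dots> = a - c^2 / b" using b by (simp add: field_simps power2_eq_square)
    finally show ?thesis using b by (simp add: field_simps)
  qed
  then have "sqrt (c^2) \<le> sqrt (a * b)" by (rule real_sqrt_le_mono)
  then show ?thesis unfolding nrm_def a_def[symmetric] b_def[symmetric] c_def[symmetric]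
    by (simp add: real_sqrt_mult)
qed

lemma nrm_nonneg: "nrm M X \<ge> 0"
  unfolding nrm_def by simp

lemma nrm_sq: "(nrm M X)^2 = (\<integral>w. (X w)^2 \<partial>M)"
  unfolding nrm_def by simp

lemma nrm_add:
  assumes X: "L2 M X" and Y: "L2 M Y"
  shows "nrm M (\<lambda>w. X w + Y w) \<le> nrm M X + nrm M Y"
proof -
  have "(nrm M (\<lambda>w. X w + Y w))^2 = (nrm M X)^2 + 2 * (\<integral>w. X w * Y w \<partial>M) + (nrm M Y)^2"
    unfolding nrm_sq using sq_expand[OF X Y, of 1] by simp
  also have "\<dots> \<le> (nrm M X)^2 + 2 * (nrm M X * nrm M Y) + (nrm M Y)^2"
    using CS[OF X Y] by simp
  also have "\<dots> = (nrm M X + nrm M Y)^2" by (simp add: power2_sum)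
  finally show ?thesis using nrm_nonneg
    by (meson add_nonneg_nonneg power2_le_imp_le)
qed

lemma nrm_cmult: "nrm M (\<lambda>w. c * X w) = \<bar>c\<bar> * nrm M X"
  unfolding nrm_def by (simp add: power_mult_distrib real_sqrt_mult)

lemma nrm_diff:
  assumes X: "L2 M X" and Y: "L2 M Y"
  shows "nrm M (\<lambda>w. X w - Y w) \<le> nrm M X + nrm M Y"
  using nrm_add[OF X L2_uminus[OF Y]] nrm_cmult[of "-1" Y] by simp

lemma nrm_sum:
  assumes "finite I" "\<And>i. i \<in> I \<Longrightarrow> L2 M (X i)"
  shows "nrm M (\<lambda>w. \<Sum>i\<in>I. X i w) \<le> (\<Sum>i\<in>I. nrm M (X i))"
  using assms
proof (induction I rule: finite_induct)
  case empty then show ?case by (simp add: nrm_def)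
next
  case (insert x F)
  have "nrm M (\<lambda>w. \<Sum>i\<in>insert x F. X i w) = nrm M (\<lambda>w. X x w + (\<Sum>i\<in>F. X i w))"
    using insert by simp
  also have "\<dots> \<le> nrm M (X x) + nrm M (\<lambda>w. \<Sum>i\<in>F. X i w)"
    using insert by (intro nrm_add L2_sum) auto
  also have "\<dots> \<le> nrm M (X x) + (\<Sum>i\<in>F. nrm M (X i))" using insert by simp
  finally show ?case using insert by simp
qed

lemma abs_E_le_nrm:
  assumes X: "L2 M X" shows "\<bar>\<integral>w. X w \<partial>M\<bar> \<le> nrm M X"
  using CS[OF X L2_const[of 1]] by (simp add: nrm_def prob_space)

end

definition Rc :: "real \<Rightarrow> real \<Rightarrow> real \<Rightarrow> real" where
  "Rc H t s = (t powr (2*H) + s powr (2*H) - \<bar>t - s\<bar> powr (2*H)) / 2"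

lemma fbm_prob: "fbm M H B \<Longrightarrow> prob_space M"
  unfolding fbm_def by blast

lemma fbm_H: "fbm M H B \<Longrightarrow> 0 < H \<and> H < 1"
  unfolding fbm_def by blast

lemma fbm_L2: assumes "fbm M H B" "t \<ge> 0" shows "L2 M (B t)"
proof -
  have "B t \<in> borel_measurable M" "integrable M (\<lambda>w. B t w * B t w)"
    using assms unfolding fbm_def by auto
  then show ?thesis unfolding L2_def by (simp add: power2_eq_square)
qed

lemma fbm_cov: assumes "fbm M H B" "t \<ge> 0" "s \<ge> 0"
  shows "(\<integral>w. B t w * B s w \<partial>M) = Rc H t s"
proof -
  have "\<forall>s\<ge>0. \<forall>t\<ge>0. integrable M (\<lambda>w. B t w * B s w) \<and>
        integral\<^sup>L M (\<lambda>w. B t w * B s w) = (t powr (2*H) + s powr (2*H) - \<bar>t - s\<bar> powr (2*H)) / 2"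
    using assms(1) unfolding fbm_def by blast
  then have "integral\<^sup>L M (\<lambda>w. B t w * B s w) = (t powr (2*H) + s powr (2*H) - \<bar>t - s\<bar> powr (2*H)) / 2"
    using assms(2,3) by blast
  then show ?thesis unfolding Rc_def .
qed

lemma fbm_mean: assumes "fbm M H B" "t \<ge> 0"
  shows "(\<integral>w. B t w \<partial>M) = 0"
proof -
  interpret prob_space M using fbm_prob[OF assms(1)] .
  have all: "\<forall>S c. finite S \<longrightarrow> S \<subseteq> {0..} \<longrightarrow>
        centered_gaussian M (\<lambda>w. \<Sum>t\<in>S. c t * B t w)"
    using assms(1) unfolding fbm_def by (elim conjE) assumption
  have "centered_gaussian M (\<lambda>w. \<Sum>u\<in>{t}. (\<lambda>_. 1::real) u * B u w)"
    using all[rule_format, of "{t}" "\<lambda>_. 1"] assms(2) by simp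
  then have cg: "centered_gaussian M (B t)" by simp
  show ?thesis
  proof (cases "\<exists>\<sigma>>0. distributed M lborel (B t) (normal_density 0 \<sigma>)")
    case True
    then obtain \<sigma> where "\<sigma> > 0" "distributed M lborel (B t) (normal_density 0 \<sigma>)" by blast
    from normal_distributed_expectation[OF this] show ?thesis .
  next
    case False
    then have "AE w in M. B t w = 0" using cg unfolding centered_gaussian_def by blast
    then show ?thesis by (rule integral_eq_zero_AE)
  qed
qed

lemma fbm_incr: assumes B: "fbm M H B" and "a \<ge> 0" "b \<ge> 0" "c \<ge> 0" "d \<ge> 0"
  shows "(\<integral>w. (B a w - B b w) * (B c w - B d w) \<partial>M) = Rc H a c - Rc H a d - Rc H b c + Rc H b d"
proof -
  interpret prob_space M using fbm_prob[OF B] .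
  have L: "L2 M (B a)" "L2 M (B b)" "L2 M (B c)" "L2 M (B d)"
    using fbm_L2[OF B assms(2)] fbm_L2[OF B assms(3)] fbm_L2[OF B assms(4)] fbm_L2[OF B assms(5)] by auto
  have "(\<lambda>w. (B a w - B b w) * (B c w - B d w)) =
        (\<lambda>w. B a w * B c w - B a w * B d w - B b w * B c w + B b w * B d w)"
    by (simp add: fun_eq_iff algebra_simps)
  moreover have i: "integrable M (\<lambda>w. B a w * B c w)" "integrable M (\<lambda>w. B a w * B d w)"
    "integrable M (\<lambda>w. B b w * B c w)" "integrable M (\<lambda>w. B b w * B d w)"
    using L2_mult_int[OF L(1) L(3)] L2_mult_int[OF L(1) L(4)] L2_mult_int[OF L(2) L(3)]
      L2_mult_int[OF L(2) L(4)] by auto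
  moreover have "(\<integral>w. B a w * B c w - B a w * B d w - B b w * B c w + B b w * B d w \<partial>M) =
     (\<integral>w. B a w * B c w \<partial>M) - (\<integral>w. B a w * B d w \<partial>M) - (\<integral>w. B b w * B c w \<partial>M) + (\<integral>w. B b w * B d w \<partial>M)"
    using i by (simp only: Bochner_Integration.integral_add Bochner_Integration.integral_diff
       Bochner_Integration.integrable_diff)
  ultimately show ?thesis using fbm_cov[OF B assms(2) assms(4)] fbm_cov[OF B assms(2) assms(5)]
    fbm_cov[OF B assms(3) assms(4)] fbm_cov[OF B assms(3) assms(5)] by simp
qed

lemma powr_sq: fixes x H :: real shows "(x powr H)^2 = x powr (2*H)"
proof -
  have "(x powr H)^2 = x powr H * x powr H" by (rule power2_eq_square)
  also have "\<dots> = x powr (H + H)" by (rule powr_add[symmetric])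
  also have "H + H = 2*H" by simp
  then have "x powr (H + H) = x powr (2*H)" by (rule arg_cong)
  finally show ?thesis .
qed

lemma fbm_incr_nrm: assumes B: "fbm M H B" and "a \<ge> 0" "b \<ge> 0"
  shows "nrm M (\<lambda>w. B a w - B b w) = \<bar>a - b\<bar> powr H"
proof -
  have H: "H > 0" using fbm_H[OF B] by simp
  have "(\<integral>w. (B a w - B b w)^2 \<partial>M) = Rc H a a - Rc H a b - Rc H b a + Rc H b b"
    using fbm_incr[OF B assms(2,3,2,3)] by (simp add: power2_eq_square)
  also have "\<dots> = \<bar>a - b\<bar> powr (2*H)"
  proof -
    have 1: "Rc H a a = a powr (2*H)" "Rc H b b = b powr (2*H)" by (simp_all add: Rc_def)
    have 2: "Rc H b a = Rc H a b" unfolding Rc_def by (simp only: abs_minus_commute[of b a] add.commute)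
    have 3: "Rc H a b = (a powr (2*H) + b powr (2*H) - \<bar>a - b\<bar> powr (2*H)) / 2" by (simp add: Rc_def)
    show ?thesis unfolding 1 2 3 by (simp add: field_simps)
  qed
  finally show ?thesis unfolding nrm_def
    by (intro real_sqrt_unique) (simp_all add: powr_sq)
qed

lemma tel1: "(\<Sum>j\<in>{1..<Suc l}. (c j - c (j - 1))) = c l - (c 0 :: real)"
  by (induction l) simp_all

lemma sbp:
  fixes c b :: "nat \<Rightarrow> real"
  shows "(\<Sum>j<m. c j * (b (Suc j) - b j)) = c 0 * (b m - b 0) + (\<Sum>j\<in>{1..<m}. (c j - c (j - 1)) * (b m - b j))"
proof (induction m)
  case 0 show ?case by simp
next
  case (Suc m)
  show ?case
  proof (cases m)
    case 0 then show ?thesis by simp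
  next
    case (Suc l)
    have t: "(\<Sum>j\<in>{1..<m}. (c j - c (j - 1))) = c (m - 1) - c 0" using tel1[of c l] Suc by simp
    have "(\<Sum>j\<in>{1..<m}. (c j - c (j - 1)) * (b (Suc m) - b j)) =
          (\<Sum>j\<in>{1..<m}. (c j - c (j - 1)) * (b m - b j) + (c j - c (j - 1)) * (b (Suc m) - b m))"
      by (intro sum.cong) (auto simp: algebra_simps)
    also have "\<dots> = (\<Sum>j\<in>{1..<m}. (c j - c (j - 1)) * (b m - b j)) + (c (m - 1) - c 0) * (b (Suc m) - b m)"
      by (simp only: sum.distrib sum_distrib_right[symmetric] t)
    finally have e: "(\<Sum>j\<in>{1..<m}. (c j - c (j - 1)) * (b (Suc m) - b j)) =
       (\<Sum>j\<in>{1..<m}. (c j - c (j - 1)) * (b m - b j)) + (c (m - 1) - c 0) * (b (Suc m) - b m)" .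
    have m1: "1 \<le> m" using Suc by simp
    have "(\<Sum>j<Suc m. c j * (b (Suc j) - b j)) = (\<Sum>j<m. c j * (b (Suc j) - b j)) + c m * (b (Suc m) - b m)"
      by simp
    also have "\<dots> = c 0 * (b m - b 0) + (\<Sum>j\<in>{1..<m}. (c j - c (j - 1)) * (b m - b j)) + c m * (b (Suc m) - b m)"
      using Suc.IH by simp
    also have "\<dots> = c 0 * (b (Suc m) - b 0) + (\<Sum>j\<in>{1..<Suc m}. (c j - c (j - 1)) * (b (Suc m) - b j))"
      using m1 e by (simp add: algebra_simps)
    finally show ?thesis .
  qed
qed

lemma sum_shift_block: fixes m a :: nat and F :: "nat \<Rightarrow> real" shows "(\<Sum>j\<in>{a..<a+m}. F j) = (\<Sum>j<m. F (a + j))"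
  by (induction m) simp_all

lemma riemann_L2:
  assumes B: "fbm M H B" and T: "T \<ge> 0"
  shows "L2 M (riemann_sum B T \<phi> k)"
proof -
  interpret prob_space M using fbm_prob[OF B] .
  have "L2 M (\<lambda>w. \<Sum>i<Suc k. \<phi> (T * real i / real (Suc k)) *
        (B (T * real (Suc i) / real (Suc k)) w - B (T * real i / real (Suc k)) w))"
    using T by (intro L2_sum L2_cmult L2_diff fbm_L2[OF B]) auto
  then show ?thesis unfolding riemann_sum_def[abs_def] .
qed

lemma riemann_nested:
  assumes B: "fbm M H B" and T: "T > 0"
    and mono: "\<And>x y. 0 \<le> x \<Longrightarrow> x \<le> y \<Longrightarrow> y \<le> T \<Longrightarrow> \<phi> x \<le> \<phi> y"
    and N: "Suc N = Suc k * Suc l"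
  shows "nrm M (\<lambda>w. riemann_sum B T \<phi> N w - riemann_sum B T \<phi> k w) \<le> (\<phi> T - \<phi> 0) * (T / real (Suc k)) powr H"
proof -
  interpret prob_space M using fbm_prob[OF B] .
  have H: "H > 0" using fbm_H[OF B] by simp
  define n where "n = Suc k"
  define m where "m = Suc l"
  have n0: "n > 0" "m > 0" by (simp_all add: n_def m_def)
  have Nnm: "Suc N = n * m" using N by (simp add: n_def m_def)
  define p where "p j = T * real j / real (n*m)" for j
  have p_nonneg: "p j \<ge> 0" for j using T by (simp add: p_def)
  have p_mono: "i \<le> j \<Longrightarrow> p i \<le> p j" for i j
    using T n0 unfolding p_def by (intro divide_right_mono mult_left_mono) auto
  have p_le: "j \<le> n*m \<Longrightarrow> p j \<le> T" for j
  proof -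
    assume "j \<le> n*m"
    then have "real j \<le> real (n*m)" by (simp only: of_nat_le_iff)
    then have "T * real j \<le> T * real (n*m)" using T by (intro mult_left_mono) auto
    then show "p j \<le> T" unfolding p_def using n0 by (simp add: divide_le_eq)
  qed
  have pT: "p (n*m) = T" unfolding p_def using n0 by simp
  have p0: "p 0 = 0" unfolding p_def by simp
  have pcoarse: "T * real i / real (Suc k) = p (i*m)" for i
  proof -
    have "p (i*m) = (T * real i * real m) / (real n * real m)" unfolding p_def by (simp add: mult.assoc)
    also have "\<dots> = T * real i / real n" using n0 by (intro mult_divide_mult_cancel_right) simp
    finally show ?thesis unfolding n_def by simp
  qed
  have fine: "riemann_sum B T \<phi> N w = (\<Sum>j<n*m. \<phi> (p j) * (B (p (Suc j)) w - B (p j) w))" for w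
    unfolding riemann_sum_def Nnm p_def ..
  have coarse: "riemann_sum B T \<phi> k w = (\<Sum>i<n. \<phi> (p (i*m)) * (B (p (i*m + m)) w - B (p (i*m)) w))" for w
  proof -
    have "Suc i * m = i * m + m" for i by simp
    then show ?thesis unfolding riemann_sum_def pcoarse n_def by (simp add: add.commute)
  qed
  define d where "d i j = \<phi> (p (i*m+j)) - \<phi> (p (i*m+j-1))" for i j
  define Y where "Y i j w = B (p (i*m+m)) w - B (p (i*m+j)) w" for i j w
  have diff: "riemann_sum B T \<phi> N w - riemann_sum B T \<phi> k w = (\<Sum>i<n. \<Sum>j\<in>{1..<m}. d i j * Y i j w)" for w
  proof -
    have "riemann_sum B T \<phi> N w = (\<Sum>i<n. \<Sum>j<m. \<phi> (p (i*m+j)) * (B (p (Suc (i*m+j))) w - B (p (i*m+j)) w))"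
      unfolding fine sum.nat_group[symmetric, where k=m and n=n] sum_shift_block ..
    then have "riemann_sum B T \<phi> N w - riemann_sum B T \<phi> k w =
       (\<Sum>i<n. (\<Sum>j<m. \<phi> (p (i*m+j)) * (B (p (Suc (i*m+j))) w - B (p (i*m+j)) w)) -
           \<phi> (p (i*m)) * (B (p (i*m + m)) w - B (p (i*m)) w))"
      unfolding coarse by (simp add: sum_subtractf)
    also have "\<dots> = (\<Sum>i<n. \<Sum>j\<in>{1..<m}. d i j * Y i j w)"
    proof (rule sum.cong[OF refl])
      fix i
      have s: "(\<Sum>j<m. \<phi> (p (i*m+j)) * (B (p (i*m + Suc j)) w - B (p (i*m+j)) w)) =
            \<phi> (p (i*m+0)) * (B (p (i*m+m)) w - B (p (i*m+0)) w) +
            (\<Sum>j\<in>{1..<m}. (\<phi> (p (i*m+j)) - \<phi> (p (i*m+(j-1)))) * (B (p (i*m+m)) w - B (p (i*m+j)) w))"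
        by (rule sbp[where c="\<lambda>j. \<phi> (p (i*m+j))" and b="\<lambda>j. B (p (i*m+j)) w"])
      have s2: "(\<Sum>j\<in>{1..<m}. (\<phi> (p (i*m+j)) - \<phi> (p (i*m+(j-1)))) * (B (p (i*m+m)) w - B (p (i*m+j)) w))
          = (\<Sum>j\<in>{1..<m}. d i j * Y i j w)"
        by (intro sum.cong refl) (auto simp: d_def Y_def)
      show "(\<Sum>j<m. \<phi> (p (i*m+j)) * (B (p (Suc (i*m+j))) w - B (p (i*m+j)) w)) -
           \<phi> (p (i*m)) * (B (p (i*m + m)) w - B (p (i*m)) w) = (\<Sum>j\<in>{1..<m}. d i j * Y i j w)"
        using s s2 by simp
    qed
    finally show ?thesis .
  qed
  have LY: "L2 M (Y i j)" for i j unfolding Y_def[abs_def]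
    by (intro L2_diff fbm_L2[OF B] p_nonneg)
  define \<delta> where "\<delta> = (T / real n) powr H"
  have \<delta>0: "\<delta> \<ge> 0" unfolding \<delta>_def by simp
  have nY: "nrm M (Y i j) \<le> \<delta>" if "j \<le> m" for i j
  proof -
    have "nrm M (Y i j) = \<bar>p (i*m+m) - p (i*m+j)\<bar> powr H"
      unfolding Y_def[abs_def] by (rule fbm_incr_nrm[OF B p_nonneg p_nonneg])
    also have "\<dots> \<le> (T / real n) powr H"
    proof (rule powr_mono2)
      show "0 \<le> H" using H by simp
      show "0 \<le> \<bar>p (i*m+m) - p (i*m+j)\<bar>" by simp
      have "p (i*m+m) - p (i*m+j) = (T * real (i*m+m) - T * real (i*m+j)) / real (n*m)"
        unfolding p_def by (simp only: diff_divide_distrib)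
      also have "T * real (i*m+m) - T * real (i*m+j) = T * (real m - real j)" by (simp add: algebra_simps)
      finally have "p (i*m+m) - p (i*m+j) = T * (real m - real j) / real (n*m)" .
      moreover have "0 \<le> real m - real j" using that by auto
      ultimately have e: "\<bar>p (i*m+m) - p (i*m+j)\<bar> = T * (real m - real j) / real (n*m)"
        using T by (simp add: abs_of_nonneg)
      have "T * (real m - real j) \<le> T * real m" using T by simp
      then have "T * (real m - real j) / real (n*m) \<le> T * real m / real (n*m)"
        by (rule divide_right_mono) simp
      then have "\<bar>p (i*m+m) - p (i*m+j)\<bar> \<le> T * real m / real (n*m)" unfolding e .
      also have "\<dots> = T / real n" using n0 by simp
      finally show "\<bar>p (i*m+m) - p (i*m+j)\<bar> \<le> T / real n" .
    qed
    finally show ?thesis unfolding \<delta>_def .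
  qed
  have dnn: "d i j \<ge> 0" if "1 \<le> j" "j < m" "i < n" for i j
  proof -
    have "i*m + j \<le> n*m"
    proof -
      have "i*m + j \<le> i*m + m" using that by simp
      also have "\<dots> = Suc i * m" by simp
      also have "\<dots> \<le> n*m" using that by (intro mult_right_mono) auto
      finally show ?thesis .
    qed
    then show ?thesis unfolding d_def using that
      by (intro diff_ge_0_iff_ge[THEN iffD2] mono p_nonneg p_mono p_le) auto
  qed
  have sumd: "(\<Sum>j\<in>{1..<m}. d i j) \<le> \<phi> (p (Suc i * m)) - \<phi> (p (i*m))" if "i < n" for i
  proof -
    have "(\<Sum>j\<in>{1..<m}. d i j) = (\<Sum>j\<in>{1..<Suc l}. \<phi> (p (i*m+j)) - \<phi> (p (i*m+(j-1))))"
      unfolding m_def by (intro sum.cong refl) (auto simp: d_def m_def)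
    also have "\<dots> = \<phi> (p (i*m+l)) - \<phi> (p (i*m+0))"
      by (rule tel1[where c="\<lambda>j. \<phi> (p (i*m+j))"])
    also have "\<dots> \<le> \<phi> (p (Suc i * m)) - \<phi> (p (i*m))"
    proof -
      have "Suc i * m \<le> n * m" using that by (intro mult_right_mono) auto
      then have "\<phi> (p (i*m+l)) \<le> \<phi> (p (Suc i * m))"
        by (intro mono p_nonneg p_mono p_le) (auto simp: m_def)
      then show ?thesis by simp
    qed
    finally show ?thesis .
  qed
  have "nrm M (\<lambda>w. riemann_sum B T \<phi> N w - riemann_sum B T \<phi> k w)
      = nrm M (\<lambda>w. \<Sum>i<n. \<Sum>j\<in>{1..<m}. d i j * Y i j w)"
    unfolding diff ..
  also have "\<dots> \<le> (\<Sum>i<n. nrm M (\<lambda>w. \<Sum>j\<in>{1..<m}. d i j * Y i j w))"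
    by (intro nrm_sum L2_sum L2_cmult LY) auto
  also have "\<dots> \<le> (\<Sum>i<n. \<Sum>j\<in>{1..<m}. nrm M (\<lambda>w. d i j * Y i j w))"
    by (intro sum_mono nrm_sum L2_cmult LY) auto
  also have "\<dots> = (\<Sum>i<n. \<Sum>j\<in>{1..<m}. \<bar>d i j\<bar> * nrm M (Y i j))"
    by (simp add: nrm_cmult)
  also have "\<dots> \<le> (\<Sum>i<n. \<Sum>j\<in>{1..<m}. d i j * \<delta>)"
  proof (intro sum_mono)
    fix i j assume i: "i \<in> {..<n}" and j: "j \<in> {1..<m}"
    then have "\<bar>d i j\<bar> = d i j" using dnn by simp
    then show "\<bar>d i j\<bar> * nrm M (Y i j) \<le> d i j * \<delta>"
      using nY[of j i] j dnn[of j i] i by (simp add: mult_left_mono)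
  qed
  also have "\<dots> = \<delta> * (\<Sum>i<n. \<Sum>j\<in>{1..<m}. d i j)"
    by (simp add: sum_distrib_left mult.commute)
  also have "\<dots> \<le> \<delta> * (\<Sum>i<n. \<phi> (p (Suc i * m)) - \<phi> (p (i*m)))"
    using \<delta>0 sumd by (intro mult_left_mono sum_mono) auto
  also have "(\<Sum>i<n. \<phi> (p (Suc i * m)) - \<phi> (p (i*m))) = \<phi> (p (n*m)) - \<phi> (p (0*m))"
    by (rule sum_lessThan_telescope[where f="\<lambda>i. \<phi> (p (i*m))"])
  also have "\<delta> * (\<phi> (p (n*m)) - \<phi> (p (0*m))) = (\<phi> T - \<phi> 0) * (T / real (Suc k)) powr H"
    unfolding \<delta>_def n_def using pT p0 by (simp add: n_def)
  finally show ?thesis .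
qed

lemma riemann_cauchy_bound:
  assumes B: "fbm M H B" and T: "T > 0"
    and mono: "\<And>x y. 0 \<le> x \<Longrightarrow> x \<le> y \<Longrightarrow> y \<le> T \<Longrightarrow> \<phi> x \<le> \<phi> y"
  shows "nrm M (\<lambda>w. riemann_sum B T \<phi> i w - riemann_sum B T \<phi> j w) \<le>
         (\<phi> T - \<phi> 0) * ((T / real (Suc i)) powr H + (T / real (Suc j)) powr H)"
proof -
  interpret prob_space M using fbm_prob[OF B] .
  define N where "N = Suc i * Suc j - 1"
  have N1: "Suc N = Suc i * Suc j" unfolding N_def by simp
  have N2: "Suc N = Suc j * Suc i" unfolding N_def by simp
  have L: "L2 M (riemann_sum B T \<phi> k)" for k using riemann_L2[OF B] T by simp
  have "nrm M (\<lambda>w. riemann_sum B T \<phi> i w - riemann_sum B T \<phi> j w) =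
        nrm M (\<lambda>w. (riemann_sum B T \<phi> N w - riemann_sum B T \<phi> j w) - (riemann_sum B T \<phi> N w - riemann_sum B T \<phi> i w))"
    by (simp add: algebra_simps)
  also have "\<dots> \<le> nrm M (\<lambda>w. riemann_sum B T \<phi> N w - riemann_sum B T \<phi> j w) + nrm M (\<lambda>w. riemann_sum B T \<phi> N w - riemann_sum B T \<phi> i w)"
    by (intro nrm_diff L2_diff L)
  also have "\<dots> \<le> (\<phi> T - \<phi> 0) * (T / real (Suc j)) powr H + (\<phi> T - \<phi> 0) * (T / real (Suc i)) powr H"
    by (intro add_mono riemann_nested[OF B T mono N2] riemann_nested[OF B T mono N1])
  finally show ?thesis by (simp add: algebra_simps)
qed

lemma riemann_cauchy:
  assumes B: "fbm M H B" and T: "T > 0"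
    and mono: "\<And>x y. 0 \<le> x \<Longrightarrow> x \<le> y \<Longrightarrow> y \<le> T \<Longrightarrow> \<phi> x \<le> \<phi> y"
    and e: "e > 0"
  shows "\<exists>N. \<forall>i\<ge>N. \<forall>j\<ge>N. nrm M (\<lambda>w. riemann_sum B T \<phi> i w - riemann_sum B T \<phi> j w) < e"
proof -
  have H: "H > 0" using fbm_H[OF B] by simp
  define V where "V = \<phi> T - \<phi> 0"
  have V0: "V \<ge> 0" unfolding V_def using mono[of 0 T] T by simp
  define a where "a k = (T / real (Suc k)) powr H" for k
  have a0: "a k \<ge> 0" for k unfolding a_def by simp
  have "(\<lambda>k. T / real (Suc k)) \<longlonglongrightarrow> 0"
    using tendsto_mult[OF tendsto_const[of T] LIMSEQ_inverse_real_of_nat] by (simp add: divide_inverse)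
  then have "a \<longlonglongrightarrow> 0" unfolding a_def
    by (intro tendsto_zero_powrI[OF _ tendsto_const]) (use T H in auto)
  then have "(\<lambda>k. 2 * (V + 1) * a k) \<longlonglongrightarrow> 2 * (V + 1) * 0" by (intro tendsto_mult tendsto_const)
  then have "eventually (\<lambda>k. 2 * (V + 1) * a k < e) sequentially"
    using e by (intro order_tendstoD(2)) auto
  then obtain N where N: "\<And>k. k \<ge> N \<Longrightarrow> 2 * (V + 1) * a k < e" by (auto simp: eventually_sequentially)
  show ?thesis
  proof (intro exI allI impI)
    fix i j assume i: "i \<ge> N" and j: "j \<ge> N"
    have "nrm M (\<lambda>w. riemann_sum B T \<phi> i w - riemann_sum B T \<phi> j w) \<le> V * (a i + a j)"
      using riemann_cauchy_bound[OF B T mono, where i=i and j=j] unfolding V_def a_def .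
    also have "\<dots> \<le> (V + 1) * (a i + a j)" using a0[of i] a0[of j] by (intro mult_right_mono) auto
    also have "\<dots> < e" using N[OF i] N[OF j] by (simp add: algebra_simps)
    finally show "nrm M (\<lambda>w. riemann_sum B T \<phi> i w - riemann_sum B T \<phi> j w) < e" .
  qed
qed

context prob_space begin

lemma L2_abs: "L2 M X \<Longrightarrow> L2 M (\<lambda>w. \<bar>X w\<bar>)"
  unfolding L2_def by (auto intro: borel_measurable_abs)

lemma nn_sq_eq: assumes "L2 M X"
  shows "(\<integral>\<^sup>+w. ennreal ((X w)^2) \<partial>M) = ennreal ((nrm M X)^2)"
  unfolding nrm_sq using assms unfolding L2_def by (intro nn_integral_eq_integral) auto

lemma L2_complete:
  fixes s :: "nat \<Rightarrow> 'a \<Rightarrow> real"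
  assumes L: "\<And>n. L2 M (s n)"
    and C: "\<And>e. e > 0 \<Longrightarrow> \<exists>N. \<forall>i\<ge>N. \<forall>j\<ge>N. nrm M (\<lambda>w. s i w - s j w) < e"
  shows "\<exists>X. X \<in> borel_measurable M \<and> (\<lambda>k. \<integral>\<^sup>+w. ennreal ((s k w - X w)^2) \<partial>M) \<longlonglongrightarrow> 0"
proof -
  have meas[measurable]: "s n \<in> borel_measurable M" for n using L unfolding L2_def by blast
  have int: "integrable M (s n)" for n by (rule L2_int[OF L])
  have L1: "\<exists>N. \<forall>i\<ge>N. \<forall>j\<ge>N. (LINT x|M. norm (s i x - s j x)) < e" if ep: "e > 0" for e
  proof -
    obtain N where N: "\<forall>i\<ge>N. \<forall>j\<ge>N. nrm M (\<lambda>w. s i w - s j w) < e" using C[OF ep] by blast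
    show ?thesis
    proof (intro exI allI impI)
      fix i j assume "i \<ge> N" "j \<ge> N"
      have Ld: "L2 M (\<lambda>w. s i w - s j w)" by (intro L2_diff L)
      have "(LINT x|M. norm (s i x - s j x)) = \<bar>LINT x|M. \<bar>s i x - s j x\<bar>\<bar>" by simp
      also have "\<dots> \<le> nrm M (\<lambda>w. \<bar>s i w - s j w\<bar>)" by (rule abs_E_le_nrm[OF L2_abs[OF Ld]])
      also have "\<dots> = nrm M (\<lambda>w. s i w - s j w)" unfolding nrm_def by simp
      also have "\<dots> < e" using N \<open>i \<ge> N\<close> \<open>j \<ge> N\<close> by blast
      finally show "(LINT x|M. norm (s i x - s j x)) < e" .
    qed
  qed
  obtain r where r: "strict_mono r" "AE x in M. Cauchy (\<lambda>i. s (r i) x)"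
    by (rule cauchy_L1_AE_cauchy_subseq[where s=s and M=M]) (use int L1 in auto)
  define X where "X w = lim (\<lambda>i. s (r i) w)" for w
  have Xm[measurable]: "X \<in> borel_measurable M" unfolding X_def by measurable
  have Xlim: "AE w in M. (\<lambda>i. s (r i) w) \<longlonglongrightarrow> X w"
    using r(2) by eventually_elim (simp add: X_def Cauchy_convergent_iff convergent_LIMSEQ_iff)
  have bound: "(\<integral>\<^sup>+w. ennreal ((s k w - X w)^2) \<partial>M) \<le> ennreal e"
    if e: "e > 0" and k: "k \<ge> N" and N: "\<forall>i\<ge>N. \<forall>j\<ge>N. nrm M (\<lambda>w. s i w - s j w) < sqrt e" for e k N
  proof -
    have "(\<integral>\<^sup>+w. ennreal ((s k w - X w)^2) \<partial>M) = (\<integral>\<^sup>+w. liminf (\<lambda>i. ennreal ((s k w - s (r i) w)^2)) \<partial>M)"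
    proof (rule nn_integral_cong_AE)
      show "AE w in M. ennreal ((s k w - X w)^2) = liminf (\<lambda>i. ennreal ((s k w - s (r i) w)^2))"
        using Xlim
      proof eventually_elim
        case (elim w)
        have "(\<lambda>i. ennreal ((s k w - s (r i) w)^2)) \<longlonglongrightarrow> ennreal ((s k w - X w)^2)"
          by (intro tendsto_ennrealI tendsto_intros elim)
        from lim_imp_Liminf[OF trivial_limit_sequentially this] show ?case by simp
      qed
    qed
    also have "\<dots> \<le> liminf (\<lambda>i. \<integral>\<^sup>+w. ennreal ((s k w - s (r i) w)^2) \<partial>M)"
      by (rule nn_integral_liminf) measurable
    also have "\<dots> \<le> limsup (\<lambda>i. \<integral>\<^sup>+w. ennreal ((s k w - s (r i) w)^2) \<partial>M)"
      by (rule Liminf_le_Limsup) simp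
    also have "\<dots> \<le> ennreal e"
    proof (rule Limsup_bounded)
      show "eventually (\<lambda>i. (\<integral>\<^sup>+w. ennreal ((s k w - s (r i) w)^2) \<partial>M) \<le> ennreal e) sequentially"
        unfolding eventually_sequentially
      proof (intro exI allI impI)
        fix i assume i: "i \<ge> N"
        then have "r i \<ge> N" using seq_suble[OF r(1), of i] by simp
        then have lt: "nrm M (\<lambda>w. s k w - s (r i) w) < sqrt e" using N k by blast
        have "(\<integral>\<^sup>+w. ennreal ((s k w - s (r i) w)^2) \<partial>M) = ennreal ((nrm M (\<lambda>w. s k w - s (r i) w))^2)"
          by (intro nn_sq_eq L2_diff L)
        also have "(nrm M (\<lambda>w. s k w - s (r i) w))^2 \<le> (sqrt e)^2"
          using lt nrm_nonneg by (intro power_mono) auto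
        then have "ennreal ((nrm M (\<lambda>w. s k w - s (r i) w))^2) \<le> ennreal e"
          using e by (intro ennreal_leI) simp
        finally show "(\<integral>\<^sup>+w. ennreal ((s k w - s (r i) w)^2) \<partial>M) \<le> ennreal e" .
      qed
    qed
    finally show ?thesis .
  qed
  have "(\<lambda>k. \<integral>\<^sup>+w. ennreal ((s k w - X w)^2) \<partial>M) \<longlonglongrightarrow> 0"
  proof (rule order_tendstoI)
    fix a :: ennreal assume "a < 0" then show "eventually (\<lambda>k. a < (\<integral>\<^sup>+w. ennreal ((s k w - X w)^2) \<partial>M)) sequentially"
      by simp
  next
    fix a :: ennreal assume a: "0 < a"
    obtain z where z: "0 < z" "z < a" using dense[OF a] by blast
    then have "z \<noteq> \<infinity>" using top.not_eq_extremum by fastforce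
    then obtain e where ez: "z = ennreal e" "e \<ge> 0" by (cases z) auto
    then have e: "e > 0" using z(1) by (cases "e = 0") auto
    obtain N where N: "\<forall>i\<ge>N. \<forall>j\<ge>N. nrm M (\<lambda>w. s i w - s j w) < sqrt e" using C[of "sqrt e"] e by auto
    show "eventually (\<lambda>k. (\<integral>\<^sup>+w. ennreal ((s k w - X w)^2) \<partial>M) < a) sequentially"
      unfolding eventually_sequentially
    proof (intro exI allI impI)
      fix k assume "k \<ge> N"
      then have "(\<integral>\<^sup>+w. ennreal ((s k w - X w)^2) \<partial>M) \<le> z" using bound[OF e _ N] ez by simp
      then show "(\<integral>\<^sup>+w. ennreal ((s k w - X w)^2) \<partial>M) < a" using z(2) by simp
    qed
  qed
  then show ?thesis using Xm by blast
qed

end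

lemma wiener_exists:
  assumes B: "fbm M H B" and T: "T > 0"
    and mono: "\<And>x y. 0 \<le> x \<Longrightarrow> x \<le> y \<Longrightarrow> y \<le> T \<Longrightarrow> \<phi> x \<le> \<phi> y"
  shows "\<exists>X. X \<in> borel_measurable M \<and> (\<lambda>k. \<integral>\<^sup>+ w. ennreal ((riemann_sum B T \<phi> k w - X w)^2) \<partial>M) \<longlonglongrightarrow> 0"
proof -
  interpret prob_space M using fbm_prob[OF B] .
  show ?thesis
  proof (rule L2_complete)
    show "L2 M (riemann_sum B T \<phi> n)" for n using riemann_L2[OF B] T by simp
    show "\<exists>N. \<forall>i\<ge>N. \<forall>j\<ge>N. nrm M (\<lambda>w. riemann_sum B T \<phi> i w - riemann_sum B T \<phi> j w) < e" if "e > 0" for e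
      by (rule riemann_cauchy[OF B T mono that])
  qed
qed

lemma wiener_props:
  assumes B: "fbm M H B" and T: "T > 0"
    and mono: "\<And>x y. 0 \<le> x \<Longrightarrow> x \<le> y \<Longrightarrow> y \<le> T \<Longrightarrow> \<phi> x \<le> \<phi> y"
  shows "L2 M (wiener_integral M B T \<phi>)"
    and "(\<lambda>k. nrm M (\<lambda>w. riemann_sum B T \<phi> k w - wiener_integral M B T \<phi> w)) \<longlonglongrightarrow> 0"
proof -
  interpret prob_space M using fbm_prob[OF B] .
  define X where "X = wiener_integral M B T \<phi>"
  define S where "S k = riemann_sum B T \<phi> k" for k
  have LS: "L2 M (S k)" for k unfolding S_def using riemann_L2[OF B] T by simp
  have "X \<in> borel_measurable M \<and> (\<lambda>k. \<integral>\<^sup>+ w. ennreal ((riemann_sum B T \<phi> k w - X w)^2) \<partial>M) \<longlonglongrightarrow> 0"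
    unfolding X_def wiener_integral_def by (rule someI_ex[OF wiener_exists[OF B T mono]])
  then have Xm[measurable]: "X \<in> borel_measurable M"
    and lim: "(\<lambda>k. \<integral>\<^sup>+ w. ennreal ((S k w - X w)^2) \<partial>M) \<longlonglongrightarrow> 0"
    unfolding S_def by auto
  have Sm[measurable]: "S k \<in> borel_measurable M" for k using LS[of k] unfolding L2_def by blast
  have "eventually (\<lambda>k. (\<integral>\<^sup>+ w. ennreal ((S k w - X w)^2) \<partial>M) < 1) sequentially"
    using lim by (intro order_tendstoD(2)) auto
  then obtain k0 where k0: "(\<integral>\<^sup>+ w. ennreal ((S k0 w - X w)^2) \<partial>M) < 1"
    by (auto simp: eventually_sequentially)
  have "integrable M (\<lambda>w. (S k0 w - X w)^2)"
    unfolding integrable_iff_bounded using k0 by (auto simp: less_top[symmetric] elim: order.strict_trans)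
  then have L0: "L2 M (\<lambda>w. S k0 w - X w)" unfolding L2_def by auto
  have "L2 M (\<lambda>w. S k0 w - (S k0 w - X w))" by (intro L2_diff LS L0)
  then show LX: "L2 M (wiener_integral M B T \<phi>)" unfolding X_def[symmetric] by simp
  have LD: "L2 M (\<lambda>w. S k w - X w)" for k using LS LX unfolding X_def[symmetric] by (intro L2_diff)
  have "(\<lambda>k. ennreal ((nrm M (\<lambda>w. S k w - X w))^2)) \<longlonglongrightarrow> 0"
    using lim unfolding nn_sq_eq[OF LD] .
  then have "(\<lambda>k. (nrm M (\<lambda>w. S k w - X w))^2) \<longlonglongrightarrow> 0"
    by (subst (asm) ennreal_tendsto_0_iff) auto
  then have "(\<lambda>k. sqrt ((nrm M (\<lambda>w. S k w - X w))^2)) \<longlonglongrightarrow> sqrt 0"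
    by (rule tendsto_real_sqrt)
  then show "(\<lambda>k. nrm M (\<lambda>w. riemann_sum B T \<phi> k w - wiener_integral M B T \<phi> w)) \<longlonglongrightarrow> 0"
    unfolding S_def X_def using nrm_nonneg by simp
qed

lemma riemann_mean:
  assumes B: "fbm M H B" and T: "T \<ge> 0"
  shows "(\<integral>w. riemann_sum B T \<phi> k w \<partial>M) = 0"
proof -
  interpret prob_space M using fbm_prob[OF B] .
  have pts: "T * real i / real (Suc k) \<ge> 0" for i using T by simp
  have I: "integrable M (\<lambda>w. \<phi> (T * real i / real (Suc k)) *
        (B (T * real (Suc i) / real (Suc k)) w - B (T * real i / real (Suc k)) w))" for i
    by (intro L2_int L2_cmult L2_diff fbm_L2[OF B] pts)
  have IB: "integrable M (B (T * real i / real (Suc k)))" for i by (intro L2_int fbm_L2[OF B] pts)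
  have "(\<integral>w. riemann_sum B T \<phi> k w \<partial>M) = (\<Sum>i<Suc k. \<integral>w. \<phi> (T * real i / real (Suc k)) *
        (B (T * real (Suc i) / real (Suc k)) w - B (T * real i / real (Suc k)) w) \<partial>M)"
    unfolding riemann_sum_def by (rule Bochner_Integration.integral_sum) (use I in auto)
  also have "\<dots> = 0"
  proof (intro sum.neutral ballI)
    fix i
    have "(\<integral>w. \<phi> (T * real i / real (Suc k)) *
        (B (T * real (Suc i) / real (Suc k)) w - B (T * real i / real (Suc k)) w) \<partial>M)
      = \<phi> (T * real i / real (Suc k)) * ((\<integral>w. B (T * real (Suc i) / real (Suc k)) w \<partial>M) - (\<integral>w. B (T * real i / real (Suc k)) w \<partial>M))"
      using IB[of i] IB[of "Suc i"] by simp
    also have "\<dots> = 0" using fbm_mean[OF B pts] fbm_mean[OF B pts[of "Suc i"]] by simp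
    finally show "(\<integral>w. \<phi> (T * real i / real (Suc k)) *
        (B (T * real (Suc i) / real (Suc k)) w - B (T * real i / real (Suc k)) w) \<partial>M) = 0" .
  qed
  finally show ?thesis .
qed

lemma wiener_mean:
  assumes B: "fbm M H B" and T: "T > 0"
    and mono: "\<And>x y. 0 \<le> x \<Longrightarrow> x \<le> y \<Longrightarrow> y \<le> T \<Longrightarrow> \<phi> x \<le> \<phi> y"
  shows "(\<integral>w. wiener_integral M B T \<phi> w \<partial>M) = 0"
proof -
  interpret prob_space M using fbm_prob[OF B] .
  define X where "X = wiener_integral M B T \<phi>"
  define S where "S k = riemann_sum B T \<phi> k" for k
  have LS: "L2 M (S k)" for k unfolding S_def using riemann_L2[OF B] T by simp
  have LX: "L2 M X" unfolding X_def by (rule wiener_props(1)[OF B T mono])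
  have lim: "(\<lambda>k. nrm M (\<lambda>w. S k w - X w)) \<longlonglongrightarrow> 0"
    unfolding S_def X_def by (rule wiener_props(2)[OF B T mono])
  have b: "\<bar>\<integral>w. X w \<partial>M\<bar> \<le> nrm M (\<lambda>w. S k w - X w)" for k
  proof -
    have "(\<integral>w. S k w - X w \<partial>M) = (\<integral>w. S k w \<partial>M) - (\<integral>w. X w \<partial>M)"
      using L2_int[OF LS] L2_int[OF LX] by simp
    moreover have "(\<integral>w. S k w \<partial>M) = 0" unfolding S_def using riemann_mean[OF B] T by simp
    ultimately have "\<bar>\<integral>w. X w \<partial>M\<bar> = \<bar>\<integral>w. S k w - X w \<partial>M\<bar>" by simp
    also have "\<dots> \<le> nrm M (\<lambda>w. S k w - X w)" by (intro abs_E_le_nrm L2_diff LS LX)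
    finally show ?thesis .
  qed
  have "\<bar>\<integral>w. X w \<partial>M\<bar> \<le> 0" by (rule LIMSEQ_le_const[OF lim]) (use b in auto)
  then show ?thesis unfolding X_def by simp
qed

lemma lin_aux: "(A::real) - (A + Vv - Pv)/2 - (Uu + A - Pu)/2 + (Uu + Vv - Q)/2 = (Pu + Pv - Q)/2"
  by (simp add: field_simps)

lemma G_nonneg:
  fixes H T u v :: real
  assumes H: "H > 0" and u: "0 \<le> u" "u \<le> T" and v: "0 \<le> v" "v \<le> T"
  shows "0 \<le> Rc H T T - Rc H T v - Rc H u T + Rc H u v"
proof -
  have 1: "Rc H T T = T powr (2*H)" by (simp add: Rc_def)
  have 2: "Rc H T v = (T powr (2*H) + v powr (2*H) - (T - v) powr (2*H)) / 2"
    using v by (simp add: Rc_def)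
  have 3: "Rc H u T = (u powr (2*H) + T powr (2*H) - (T - u) powr (2*H)) / 2"
    using u by (simp add: Rc_def abs_minus_commute[of u T])
  have 4: "Rc H u v = (u powr (2*H) + v powr (2*H) - \<bar>u - v\<bar> powr (2*H)) / 2" by (simp add: Rc_def)
  have e: "Rc H T T - Rc H T v - Rc H u T + Rc H u v = ((T - u) powr (2*H) + (T - v) powr (2*H) - \<bar>u - v\<bar> powr (2*H)) / 2"
    unfolding 1 2 3 4 by (rule lin_aux)
  have ineq: "\<bar>u - v\<bar> powr (2*H) \<le> (T - u) powr (2*H) + (T - v) powr (2*H)"
  proof (cases "u \<le> v")
    case True
    then have "\<bar>u - v\<bar> powr (2*H) \<le> (T - u) powr (2*H)" using H u v by (intro powr_mono2) auto
    moreover have "0 \<le> (T - v) powr (2*H)" by simp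
    ultimately show ?thesis by linarith
  next
    case False
    then have "\<bar>u - v\<bar> powr (2*H) \<le> (T - v) powr (2*H)" using H u v by (intro powr_mono2) auto
    moreover have "0 \<le> (T - u) powr (2*H)" by simp
    ultimately show ?thesis by linarith
  qed
  show ?thesis unfolding e using ineq by simp
qed

lemma riemann_repr:
  fixes \<phi> :: "real \<Rightarrow> real"
  assumes t_def: "t = (\<lambda>j. T * real j / real (Suc k))"
  shows "riemann_sum B T \<phi> k w = (\<Sum>j<Suc k. (if j = 0 then \<phi> 0 else \<phi> (t j) - \<phi> (t (j - 1))) * (B T w - B (t j) w))"
proof -
  have tm: "t (Suc k) = T" unfolding t_def by simp
  have t0: "t 0 = 0" unfolding t_def by simp
  have "riemann_sum B T \<phi> k w = (\<Sum>j<Suc k. \<phi> (t j) * (B (t (Suc j)) w - B (t j) w))"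
    unfolding riemann_sum_def t_def ..
  also have "\<dots> = \<phi> (t 0) * (B (t (Suc k)) w - B (t 0) w) + (\<Sum>j\<in>{1..<Suc k}. (\<phi> (t j) - \<phi> (t (j - 1))) * (B (t (Suc k)) w - B (t j) w))"
    by (rule sbp[where c="\<lambda>j. \<phi> (t j)" and b="\<lambda>j. B (t j) w"])
  also have "\<dots> = (\<Sum>j<Suc k. (if j = 0 then \<phi> 0 else \<phi> (t j) - \<phi> (t (j - 1))) * (B T w - B (t j) w))"
  proof -
    have "(\<Sum>j<Suc k. (if j = 0 then \<phi> 0 else \<phi> (t j) - \<phi> (t (j - 1))) * (B T w - B (t j) w))
      = (\<Sum>j\<in>{0..<Suc k}. (if j = 0 then \<phi> 0 else \<phi> (t j) - \<phi> (t (j - 1))) * (B T w - B (t j) w))"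
      by (simp add: lessThan_atLeast0)
    also have "\<dots> = \<phi> 0 * (B T w - B (t 0) w) + (\<Sum>j\<in>{Suc 0..<Suc k}. (if j = 0 then \<phi> 0 else \<phi> (t j) - \<phi> (t (j - 1))) * (B T w - B (t j) w))"
      by (subst sum.atLeast_Suc_lessThan) simp_all
    also have "(\<Sum>j\<in>{Suc 0..<Suc k}. (if j = 0 then \<phi> 0 else \<phi> (t j) - \<phi> (t (j - 1))) * (B T w - B (t j) w))
        = (\<Sum>j\<in>{1..<Suc k}. (\<phi> (t j) - \<phi> (t (j - 1))) * (B T w - B (t j) w))"
      by (intro sum.cong) auto
    finally show ?thesis unfolding tm t0 by simp
  qed
  finally show ?thesis .
qed

lemma sum_ge_single:
  fixes f :: "nat \<Rightarrow> real"
  assumes "\<And>i. i < n \<Longrightarrow> f i \<ge> 0" "0 < n"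
  shows "f 0 \<le> (\<Sum>i<n. f i)"
  using assms by (intro member_le_sum) auto

lemma riemann_prod_lb:
  assumes B: "fbm M H B" and T: "T > 0"
    and mono1: "\<And>x y. 0 \<le> x \<Longrightarrow> x \<le> y \<Longrightarrow> y \<le> T \<Longrightarrow> \<phi> x \<le> \<phi> y"
    and mono2: "\<And>x y. 0 \<le> x \<Longrightarrow> x \<le> y \<Longrightarrow> y \<le> T \<Longrightarrow> \<psi> x \<le> \<psi> y"
    and p1: "\<phi> 0 \<ge> 0" and p2: "\<psi> 0 \<ge> 0"
  shows "\<phi> 0 * \<psi> 0 * T powr (2*H) \<le> (\<integral>w. riemann_sum B T \<phi> k w * riemann_sum B T \<psi> k w \<partial>M)"
proof -
  interpret prob_space M using fbm_prob[OF B] .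
  have H: "H > 0" using fbm_H[OF B] by simp
  define t where "t = (\<lambda>j. T * real j / real (Suc k))"
  have t0: "t j \<ge> 0" for j using T unfolding t_def by simp
  have tT: "t j \<le> T" if "j < Suc k" for j
  proof -
    have "real j \<le> real (Suc k)" using that by simp
    then have "T * real j \<le> T * real (Suc k)" using T by (intro mult_left_mono) auto
    then show ?thesis unfolding t_def by (simp add: divide_le_eq)
  qed
  have tmono: "i \<le> j \<Longrightarrow> t i \<le> t j" for i j
    unfolding t_def using T by (intro divide_right_mono mult_left_mono) auto
  define q where "q \<phi> j = (if j = 0 then \<phi> 0 else \<phi> (t j) - \<phi> (t (j - 1)))" for \<phi> :: "real \<Rightarrow> real" and j
  define Y where "Y j w = B T w - B (t j) w" for j w
  have LY: "L2 M (Y j)" for j unfolding Y_def[abs_def] using T by (intro L2_diff fbm_L2[OF B] t0) auto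
  have rep: "riemann_sum B T \<phi> k w = (\<Sum>j<Suc k. q \<phi> j * Y j w)" for \<phi> w
    unfolding q_def Y_def by (rule riemann_repr[OF t_def])
  have q1: "q \<phi> j \<ge> 0" and q2: "q \<psi> j \<ge> 0" if "j < Suc k" for j
  proof -
    have "j \<noteq> 0 \<Longrightarrow> \<phi> (t (j - 1)) \<le> \<phi> (t j)" "j \<noteq> 0 \<Longrightarrow> \<psi> (t (j - 1)) \<le> \<psi> (t j)"
      using that by (auto intro!: mono1 mono2 t0 tmono tT)
    then show "q \<phi> j \<ge> 0" "q \<psi> j \<ge> 0" unfolding q_def using p1 p2 by auto
  qed
  have EY: "(\<integral>w. Y i w * Y j w \<partial>M) \<ge> 0" if "i < Suc k" "j < Suc k" for i j
  proof -
    have "(\<integral>w. Y i w * Y j w \<partial>M) = Rc H T T - Rc H T (t j) - Rc H (t i) T + Rc H (t i) (t j)"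
      unfolding Y_def using T by (intro fbm_incr[OF B] t0) auto
    also have "\<dots> \<ge> 0" using that by (intro G_nonneg H t0 tT)
    finally show ?thesis .
  qed
  have EY0: "(\<integral>w. Y 0 w * Y 0 w \<partial>M) = T powr (2*H)"
  proof -
    have "(\<integral>w. Y 0 w * Y 0 w \<partial>M) = Rc H T T - Rc H T (t 0) - Rc H (t 0) T + Rc H (t 0) (t 0)"
      unfolding Y_def using T by (intro fbm_incr[OF B] t0) auto
    also have "\<dots> = T powr (2*H)" unfolding t_def Rc_def using T by simp
    finally show ?thesis .
  qed
  have "(\<integral>w. riemann_sum B T \<phi> k w * riemann_sum B T \<psi> k w \<partial>M)
      = (\<integral>w. (\<Sum>i<Suc k. \<Sum>j<Suc k. q \<phi> i * q \<psi> j * (Y i w * Y j w)) \<partial>M)"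
    unfolding rep sum_product
    by (rule Bochner_Integration.integral_cong[OF refl], intro sum.cong refl) (simp add: mult_ac)
  also have "\<dots> = (\<Sum>i<Suc k. \<Sum>j<Suc k. q \<phi> i * q \<psi> j * (\<integral>w. Y i w * Y j w \<partial>M))"
  proof -
    have I: "integrable M (\<lambda>w. q \<phi> i * q \<psi> j * (Y i w * Y j w))" for i j
      by (intro integrable_mult_right L2_mult_int LY)
    have I2: "integrable M (\<lambda>w. \<Sum>j<Suc k. q \<phi> i * q \<psi> j * (Y i w * Y j w))" for i
      using I by (intro Bochner_Integration.integrable_sum) auto
    have "(\<integral>w. (\<Sum>i<Suc k. \<Sum>j<Suc k. q \<phi> i * q \<psi> j * (Y i w * Y j w)) \<partial>M)
        = (\<Sum>i<Suc k. \<integral>w. (\<Sum>j<Suc k. q \<phi> i * q \<psi> j * (Y i w * Y j w)) \<partial>M)"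
      using I2 by (intro Bochner_Integration.integral_sum) auto
    also have "\<dots> = (\<Sum>i<Suc k. \<Sum>j<Suc k. \<integral>w. q \<phi> i * q \<psi> j * (Y i w * Y j w) \<partial>M)"
      using I by (intro sum.cong refl Bochner_Integration.integral_sum) auto
    finally show ?thesis by simp
  qed
  also have "\<dots> \<ge> (\<Sum>j<Suc k. q \<phi> 0 * q \<psi> j * (\<integral>w. Y 0 w * Y j w \<partial>M))"
  proof (rule sum_ge_single[where f="\<lambda>i. \<Sum>j<Suc k. q \<phi> i * q \<psi> j * (\<integral>w. Y i w * Y j w \<partial>M)"])
    fix i assume i: "i < Suc k"
    show "0 \<le> (\<Sum>j<Suc k. q \<phi> i * q \<psi> j * (\<integral>w. Y i w * Y j w \<partial>M))"
    proof (intro sum_nonneg)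
      fix j assume "j \<in> {..<Suc k}"
      then have j: "j < Suc k" by simp
      show "0 \<le> q \<phi> i * q \<psi> j * (\<integral>w. Y i w * Y j w \<partial>M)"
        by (intro mult_nonneg_nonneg q1 q2 EY i j)
    qed
  qed simp
  also have "(\<Sum>j<Suc k. q \<phi> 0 * q \<psi> j * (\<integral>w. Y 0 w * Y j w \<partial>M)) \<ge> q \<phi> 0 * q \<psi> 0 * (\<integral>w. Y 0 w * Y 0 w \<partial>M)"
  proof (rule sum_ge_single[where f="\<lambda>j. q \<phi> 0 * q \<psi> j * (\<integral>w. Y 0 w * Y j w \<partial>M)"])
    fix j assume j: "j < Suc k"
    show "0 \<le> q \<phi> 0 * q \<psi> j * (\<integral>w. Y 0 w * Y j w \<partial>M)"
      by (intro mult_nonneg_nonneg q1 q2 EY j) simp_all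
  qed simp
  also have "q \<phi> 0 * q \<psi> 0 * (\<integral>w. Y 0 w * Y 0 w \<partial>M) = \<phi> 0 * \<psi> 0 * T powr (2*H)"
    unfolding EY0 q_def by simp
  finally show ?thesis .
qed

lemma wiener_prod_lb:
  assumes B: "fbm M H B" and T: "T > 0"
    and mono1: "\<And>x y. 0 \<le> x \<Longrightarrow> x \<le> y \<Longrightarrow> y \<le> T \<Longrightarrow> \<phi>1 x \<le> \<phi>1 y"
    and mono2: "\<And>x y. 0 \<le> x \<Longrightarrow> x \<le> y \<Longrightarrow> y \<le> T \<Longrightarrow> \<phi>2 x \<le> \<phi>2 y"
    and p1: "\<phi>1 0 \<ge> 0" and p2: "\<phi>2 0 \<ge> 0"
  shows "\<phi>1 0 * \<phi>2 0 * T powr (2*H) \<le> (\<integral>w. wiener_integral M B T \<phi>1 w * wiener_integral M B T \<phi>2 w \<partial>M)"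
proof -
  interpret prob_space M using fbm_prob[OF B] .
  define X1 where "X1 = wiener_integral M B T \<phi>1"
  define X2 where "X2 = wiener_integral M B T \<phi>2"
  define S1 where "S1 k = riemann_sum B T \<phi>1 k" for k
  define S2 where "S2 k = riemann_sum B T \<phi>2 k" for k
  have LS1: "L2 M (S1 k)" for k unfolding S1_def using riemann_L2[OF B] T by simp
  have LS2: "L2 M (S2 k)" for k unfolding S2_def using riemann_L2[OF B] T by simp
  have LX1: "L2 M X1" unfolding X1_def by (rule wiener_props(1)[OF B T mono1])
  have LX2: "L2 M X2" unfolding X2_def by (rule wiener_props(1)[OF B T mono2])
  define a where "a k = nrm M (\<lambda>w. S1 k w - X1 w)" for k
  define c where "c k = nrm M (\<lambda>w. S2 k w - X2 w)" for k
  have a: "a \<longlonglongrightarrow> 0" unfolding a_def S1_def X1_def by (rule wiener_props(2)[OF B T mono1])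
  have c: "c \<longlonglongrightarrow> 0" unfolding c_def S2_def X2_def by (rule wiener_props(2)[OF B T mono2])
  define b where "b k = a k * nrm M X2 + (nrm M X1 + a k) * c k" for k
  have b: "b \<longlonglongrightarrow> 0" unfolding b_def
    using tendsto_add[OF tendsto_mult[OF a tendsto_const] tendsto_mult[OF tendsto_add[OF tendsto_const a] c]]
    by simp
  have bnd: "\<phi>1 0 * \<phi>2 0 * T powr (2*H) - b k \<le> (\<integral>w. X1 w * X2 w \<partial>M)" for k
  proof -
    have LD1: "L2 M (\<lambda>w. X1 w - S1 k w)" by (intro L2_diff LX1 LS1)
    have LD2: "L2 M (\<lambda>w. X2 w - S2 k w)" by (intro L2_diff LX2 LS2)
    have n1: "nrm M (\<lambda>w. X1 w - S1 k w) = a k" unfolding a_def nrm_def by (simp add: power2_commute)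
    have n2: "nrm M (\<lambda>w. X2 w - S2 k w) = c k" unfolding c_def nrm_def by (simp add: power2_commute)
    have nS1: "nrm M (S1 k) \<le> nrm M X1 + a k"
    proof -
      have "nrm M (S1 k) = nrm M (\<lambda>w. X1 w - (X1 w - S1 k w))" by simp
      also have "\<dots> \<le> nrm M X1 + nrm M (\<lambda>w. X1 w - S1 k w)" by (intro nrm_diff LX1 LD1)
      finally show ?thesis unfolding n1 .
    qed
    have split: "(\<integral>w. X1 w * X2 w \<partial>M) - (\<integral>w. S1 k w * S2 k w \<partial>M) =
        (\<integral>w. (X1 w - S1 k w) * X2 w \<partial>M) + (\<integral>w. S1 k w * (X2 w - S2 k w) \<partial>M)"
    proof -
      have i: "integrable M (\<lambda>w. X1 w * X2 w)" "integrable M (\<lambda>w. S1 k w * S2 k w)"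
        "integrable M (\<lambda>w. S1 k w * X2 w)"
        by (intro L2_mult_int LX1 LX2 LS1 LS2)+
      have "(\<lambda>w. (X1 w - S1 k w) * X2 w) = (\<lambda>w. X1 w * X2 w - S1 k w * X2 w)"
        "(\<lambda>w. S1 k w * (X2 w - S2 k w)) = (\<lambda>w. S1 k w * X2 w - S1 k w * S2 k w)"
        by (auto simp: fun_eq_iff algebra_simps)
      then show ?thesis using i by simp
    qed
    have e1: "\<bar>\<integral>w. (X1 w - S1 k w) * X2 w \<partial>M\<bar> \<le> a k * nrm M X2"
      using CS[OF LD1 LX2] unfolding n1 .
    have e2: "\<bar>\<integral>w. S1 k w * (X2 w - S2 k w) \<partial>M\<bar> \<le> (nrm M X1 + a k) * c k"
    proof -
      have "\<bar>\<integral>w. S1 k w * (X2 w - S2 k w) \<partial>M\<bar> \<le> nrm M (S1 k) * c k"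
        using CS[OF LS1 LD2] unfolding n2 .
      also have "\<dots> \<le> (nrm M X1 + a k) * c k"
        using nS1 by (intro mult_right_mono) (simp_all add: c_def nrm_nonneg)
      finally show ?thesis .
    qed
    have lb: "\<phi>1 0 * \<phi>2 0 * T powr (2*H) \<le> (\<integral>w. S1 k w * S2 k w \<partial>M)"
      unfolding S1_def S2_def by (rule riemann_prod_lb[where \<phi>=\<phi>1 and \<psi>=\<phi>2, OF B T mono1 mono2 p1 p2])
    show ?thesis using split e1 e2 lb unfolding b_def by linarith
  qed
  have "(\<lambda>k. \<phi>1 0 * \<phi>2 0 * T powr (2*H) - b k) \<longlonglongrightarrow> \<phi>1 0 * \<phi>2 0 * T powr (2*H) - 0"
    by (intro tendsto_diff tendsto_const b)
  then have "\<phi>1 0 * \<phi>2 0 * T powr (2*H) - 0 \<le> (\<integral>w. X1 w * X2 w \<partial>M)"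
    by (rule LIMSEQ_le_const2) (use bnd in auto)
  then show ?thesis unfolding X1_def X2_def by simp
qed

lemma const_set_int: "set_integrable lborel {l..u::real} (\<lambda>_. c::real)"
  unfolding set_integrable_def
proof -
  have "integrable lborel (indicat_real {l..u})"
    by (intro integrable_real_indicator) (simp_all add: emeasure_lborel_Icc_eq)
  then have "integrable lborel (\<lambda>x. indicat_real {l..u} x * c)" by (rule integrable_mult_left)
  then show "integrable lborel (\<lambda>x. indicat_real {l..u} x *\<^sub>R c)" by simp
qed

lemma a_int:
  fixes a :: "real \<Rightarrow> real" and T a0 a1 :: real
  assumes a_meas: "set_borel_measurable lborel {0..T} a"
    and a_bounds: "\<forall>t\<in>{0..T}. a0 \<le> a t \<and> a t \<le> a1" and a0: "0 < a0"
  shows "set_integrable lborel {0..T} a"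
proof (rule set_integrable_bound[OF const_set_int[of 0 T a1] a_meas])
  show "AE x in lborel. x \<in> {0..T} \<longrightarrow> norm (a x) \<le> norm a1"
    using a_bounds a0 by (intro AE_I2) force
qed

lemma int_mono_a:
  fixes a :: "real \<Rightarrow> real" and T x y :: real
  assumes aint: "set_integrable lborel {0..T} a" and apos: "\<forall>t\<in>{0..T}. 0 \<le> a t"
    and xy: "0 \<le> x" "x \<le> y" "y \<le> T"
  shows "(LINT s:{y..T}|lborel. a s) \<le> (LINT s:{x..T}|lborel. a s)"
proof -
  have ix: "set_integrable lborel {x..T} a" by (rule set_integrable_subset[OF aint]) (use xy in auto)
  have iy: "set_integrable lborel {x..T} (\<lambda>s. indicator {y..T} s * a s)"
  proof -
    have "set_integrable lborel {y..T} a" by (rule set_integrable_subset[OF aint]) (use xy in auto)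
    then show ?thesis unfolding set_integrable_def
      by (rule Bochner_Integration.integrable_cong[THEN iffD1, rotated 2])
         (use xy in \<open>auto simp: indicator_def\<close>)
  qed
  have "(LINT s:{y..T}|lborel. a s) = (LINT s:{x..T}|lborel. indicator {y..T} s * a s)"
    unfolding set_lebesgue_integral_def
    by (intro Bochner_Integration.integral_cong) (use xy in \<open>auto simp: indicator_def\<close>)
  also have "\<dots> \<le> (LINT s:{x..T}|lborel. a s)"
    by (rule set_integral_mono[OF iy ix]) (use apos xy in \<open>auto simp: indicator_def\<close>)
  finally show ?thesis .
qed

lemma sbm_closed:
  assumes T: "T > 0" and h: "set_borel_measurable lborel {0<..<T} h"
  shows "set_borel_measurable lborel {0..T} (h::real \<Rightarrow> real)"
proof -
  have h': "(\<lambda>x. indicator {0<..<T} x * h x) \<in> borel_measurable lborel"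
    using h unfolding set_borel_measurable_def by simp
  have "(\<lambda>x. indicator {0..T} x * h x) = (\<lambda>x. indicator {0<..<T} x * h x + indicator {0} x * h 0 + indicator {T} x * h T)"
    using T by (auto simp: fun_eq_iff indicator_def)
  moreover have "(\<lambda>x. indicator {0<..<T} x * h x + indicator {0} x * h 0 + indicator {T} x * h T) \<in> borel_measurable lborel"
    using h' by measurable
  ultimately show ?thesis unfolding set_borel_measurable_def by simp
qed

theorem theorem4p1:
  fixes R0 T a0 a1 H :: real
    and a h f1 g1 f2 g2 :: "real \<Rightarrow> real"
    and M :: "'w measure" and B :: "real \<Rightarrow> 'w \<Rightarrow> real"
  assumes R0: "R0 > 0" and T: "T > 0"
    and a_meas: "set_borel_measurable lborel {0..T} a"
    and a0: "0 < a0" and a_bounds: "\<forall>t\<in>{0..T}. a0 \<le> a t \<and> a t \<le> a1"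
    and B: "fbm M H B"
    and h_meas: "set_borel_measurable lborel {0<..<T} h"
    and h_bdd: "\<exists>K. AE t in lborel. t \<in> {0<..<T} \<longrightarrow> \<bar>h t\<bar> \<le> K"
    and h_pos: "\<exists>C>0. AE t in lborel. t \<in> {0<..<T} \<longrightarrow> C \<le> h t"
    and f1: "L2r R0 f1" and g1: "L2r R0 g1" and g1_nz: "L2r_norm_sq R0 g1 \<noteq> 0"
    and f2: "L2r R0 f2" and g2: "L2r R0 g2" and g2_nz: "L2r_norm_sq R0 g2 \<noteq> 0"
    and mean_eq: "\<forall>n\<ge>1. integral\<^sup>L M (u_coef M B R0 T a h f1 g1 n)
                        = integral\<^sup>L M (u_coef M B R0 T a h f2 g2 n)"
    and cov_eq: "\<forall>m\<ge>1. \<forall>n\<ge>1.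
        covariance M (u_coef M B R0 T a h f1 g1 m) (u_coef M B R0 T a h f1 g1 n)
      = covariance M (u_coef M B R0 T a h f2 g2 m) (u_coef M B R0 T a h f2 g2 n)"
  shows "(AE r in lborel. r \<in> {0..R0} \<longrightarrow> f1 r = f2 r) \<and>
         ((AE r in lborel. r \<in> {0..R0} \<longrightarrow> g1 r = g2 r) \<or>
          (AE r in lborel. r \<in> {0..R0} \<longrightarrow> g1 r = - g2 r))"
proof -
  interpret prob_space M using fbm_prob[OF B] .
  have Hpos: "H > 0" using fbm_H[OF B] by simp
  have aint: "set_integrable lborel {0..T} a" by (rule a_int[OF a_meas a_bounds a0])
  have apos: "\<forall>t\<in>{0..T}. 0 \<le> a t"
  proof
    fix t assume "t \<in> {0..T}"
    then have "a0 \<le> a t" using a_bounds by blast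
    then show "0 \<le> a t" using a0 by linarith
  qed
  define phi where "phi n = (\<lambda>\<tau>. exp (- lam R0 n * (LINT s:{\<tau>..T}|lborel. a s)))" for n
  have lam0: "lam R0 n \<ge> 0" for n unfolding lam_def by simp
  have mono: "phi n x \<le> phi n y" if "0 \<le> x" "x \<le> y" "y \<le> T" for n x y
  proof -
    have "lam R0 n * (LINT s:{y..T}|lborel. a s) \<le> lam R0 n * (LINT s:{x..T}|lborel. a s)"
      by (intro mult_left_mono lam0 int_mono_a[OF aint apos that])
    then show ?thesis unfolding phi_def by simp
  qed
  have phipos: "phi n x > 0" for n x unfolding phi_def by simp
  define X where "X n = wiener_integral M B T (phi n)" for n
  define K where "K n = (LINT \<tau>:{0..T}|lborel. h \<tau> * phi n \<tau>)" for n
  have ucoef: "u_coef M B R0 T a h f g n = (\<lambda>w. coef R0 f n * K n + coef R0 g n * X n w)" for f g n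
    unfolding u_coef_def K_def X_def phi_def by (simp add: fun_eq_iff)
  have LX: "L2 M (X n)" for n unfolding X_def by (rule wiener_props(1)[OF B T mono])
  have EX: "(\<integral>w. X n w \<partial>M) = 0" for n unfolding X_def by (rule wiener_mean[OF B T mono])
  have cpos: "(\<integral>w. X m w * X n w \<partial>M) > 0" for m n
  proof -
    have "phi m 0 * phi n 0 * T powr (2*H) \<le> (\<integral>w. X m w * X n w \<partial>M)"
      unfolding X_def by (rule wiener_prod_lb[OF B T mono mono]) (use phipos in \<open>auto simp: less_imp_le\<close>)
    moreover have "phi m 0 * phi n 0 * T powr (2*H) > 0" using phipos T by simp
    ultimately show ?thesis by linarith
  qed
  have Kpos: "K n > 0" for n
  proof -
    obtain Kh where Kh: "AE t in lborel. t \<in> {0<..<T} \<longrightarrow> \<bar>h t\<bar> \<le> Kh" using h_bdd by blast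
    obtain C where C: "C > 0" "AE t in lborel. t \<in> {0<..<T} \<longrightarrow> C \<le> h t" using h_pos by blast
    define ph' where "ph' x = phi n (max 0 (min T x))" for x
    have "mono ph'" unfolding mono_def ph'_def using T by (intro allI impI mono) auto
    then have ph'm: "ph' \<in> borel_measurable borel" by (rule borel_measurable_mono)
    have hc: "set_borel_measurable lborel {0..T} h" by (rule sbm_closed[OF T h_meas])
    have "set_borel_measurable lborel {0..T} (\<lambda>\<tau>. h \<tau> * ph' \<tau>)" by (rule sbm_mult(1)[OF hc ph'm])
    moreover have "(\<lambda>x. indicator {0..T} x *\<^sub>R (h x * ph' x)) = (\<lambda>x. indicator {0..T} x *\<^sub>R (h x * phi n x))"
      unfolding ph'_def by (auto simp: fun_eq_iff indicator_def)
    ultimately have meas: "set_borel_measurable lborel {0..T} (\<lambda>\<tau>. h \<tau> * phi n \<tau>)"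
      unfolding set_borel_measurable_def by simp
    have AE0: "AE x in lborel. x \<noteq> 0" "AE x in lborel. x \<noteq> T" by (rule AE_lborel_singleton)+
    have int: "set_integrable lborel {0..T} (\<lambda>\<tau>. h \<tau> * phi n \<tau>)"
    proof (rule set_integrable_bound[OF const_set_int[of 0 T "\<bar>Kh\<bar> * phi n T"] meas])
      show "AE x in lborel. x \<in> {0..T} \<longrightarrow> norm (h x * phi n x) \<le> norm (\<bar>Kh\<bar> * phi n T)"
        using Kh AE0
      proof eventually_elim
        case (elim x)
        show ?case
        proof
          assume x: "x \<in> {0..T}"
          then have hx: "\<bar>h x\<bar> \<le> \<bar>Kh\<bar>" using elim by auto
          have px: "phi n x \<le> phi n T" using x by (intro mono) auto
          have "\<bar>h x\<bar> * phi n x \<le> \<bar>Kh\<bar> * phi n T"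
            by (rule mult_mono[OF hx px]) (use phipos[of n x] in auto)
          then show "norm (h x * phi n x) \<le> norm (\<bar>Kh\<bar> * phi n T)"
            using phipos[of n x] phipos[of n T] by (simp add: abs_mult)
        qed
      qed
    qed
    have "(LINT \<tau>:{0..T}|lborel. C * phi n 0) \<le> (LINT \<tau>:{0..T}|lborel. h \<tau> * phi n \<tau>)"
    proof (rule set_integral_mono_AE[OF const_set_int int])
      show "AE x\<in>{0..T} in lborel. C * phi n 0 \<le> h x * phi n x"
        using C(2) AE0
      proof eventually_elim
        case (elim x)
        show ?case
        proof
          assume x: "x \<in> {0..T}"
          then have hx: "C \<le> h x" using elim by auto
          have px: "phi n 0 \<le> phi n x" using x by (intro mono) auto
          show "C * phi n 0 \<le> h x * phi n x"
            by (rule mult_mono[OF hx px]) (use C(1) hx phipos[of n 0] in auto)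
        qed
      qed
    qed
    moreover have "(LINT \<tau>:{0..T}|lborel. C * phi n 0) = T * (C * phi n 0)"
      using T by (subst set_integral_const) (auto simp: emeasure_lborel_Icc_eq)
    moreover have "T * (C * phi n 0) > 0" using T C(1) phipos[of n 0] by simp
    ultimately show ?thesis unfolding K_def by linarith
  qed
  have mean: "(\<integral>w. u_coef M B R0 T a h f g n w \<partial>M) = coef R0 f n * K n" for f g n
    unfolding ucoef using L2_int[OF LX[of n]] EX[of n] by (simp add: prob_space)
  have cov: "covariance M (u_coef M B R0 T a h f g m) (u_coef M B R0 T a h f g n) =
      coef R0 g m * coef R0 g n * (\<integral>w. X m w * X n w \<partial>M)" for f g m n
  proof -
    have "covariance M (u_coef M B R0 T a h f g m) (u_coef M B R0 T a h f g n) =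
        (\<integral>w. (coef R0 g m * coef R0 g n) * (X m w * X n w) \<partial>M)"
      unfolding covariance_def mean unfolding ucoef by (simp add: algebra_simps)
    then show ?thesis by simp
  qed
  have feq: "coef R0 f1 n = 1 * coef R0 f2 n" if "n \<ge> 1" for n
  proof -
    have "(\<integral>w. u_coef M B R0 T a h f1 g1 n w \<partial>M) = coef R0 f1 n * K n" by (rule mean)
    moreover have "(\<integral>w. u_coef M B R0 T a h f2 g2 n w \<partial>M) = coef R0 f2 n * K n" by (rule mean)
    ultimately show ?thesis using mean_eq that Kpos[of n] by simp
  qed
  have geq: "coef R0 g1 m * coef R0 g1 n = coef R0 g2 m * coef R0 g2 n" if "m \<ge> 1" "n \<ge> 1" for m n
  proof -
    have "covariance M (u_coef M B R0 T a h f1 g1 m) (u_coef M B R0 T a h f1 g1 n) =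
      coef R0 g1 m * coef R0 g1 n * (\<integral>w. X m w * X n w \<partial>M)" by (rule cov)
    moreover have "covariance M (u_coef M B R0 T a h f2 g2 m) (u_coef M B R0 T a h f2 g2 n) =
      coef R0 g2 m * coef R0 g2 n * (\<integral>w. X m w * X n w \<partial>M)" by (rule cov)
    ultimately show ?thesis using cov_eq that cpos[of m n] by simp
  qed
  obtain s :: real where s: "s = 1 \<or> s = -1" "\<And>n. n \<ge> 1 \<Longrightarrow> coef R0 g1 n = s * coef R0 g2 n"
  proof (cases "\<exists>n0\<ge>1. coef R0 g1 n0 \<noteq> 0")
    case True
    then obtain n0 where n0: "n0 \<ge> 1" "coef R0 g1 n0 \<noteq> 0" by blast
    have sq: "(coef R0 g1 n0)^2 = (coef R0 g2 n0)^2" using geq[OF n0(1) n0(1)] by (simp add: power2_eq_square)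
    have g2n0: "coef R0 g2 n0 \<noteq> 0"
    proof
      assume "coef R0 g2 n0 = 0"
      then have "(coef R0 g1 n0)^2 = 0" using sq by simp
      then show False using n0(2) by simp
    qed
    define s where "s = coef R0 g2 n0 / coef R0 g1 n0"
    have "s^2 = 1" unfolding s_def using sq n0(2) g2n0 by (simp add: power_divide)
    then have "s = 1 \<or> s = -1" by (simp add: power2_eq_1_iff)
    moreover have "coef R0 g1 n = s * coef R0 g2 n" if "n \<ge> 1" for n
    proof -
      have "coef R0 g1 n0 * coef R0 g1 n = coef R0 g2 n0 * coef R0 g2 n" by (rule geq[OF n0(1) that])
      then show ?thesis unfolding s_def using n0(2) g2n0 by (simp add: field_simps)
    qed
    ultimately show ?thesis using that by blast
  next
    case False
    have "coef R0 g1 n = 1 * coef R0 g2 n" if "n \<ge> 1" for n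
    proof -
      have "coef R0 g1 n = 0" using False that by blast
      moreover have "(coef R0 g2 n)^2 = (coef R0 g1 n)^2" using geq[OF that that] by (simp add: power2_eq_square)
      ultimately show ?thesis by simp
    qed
    then show ?thesis using that by blast
  qed
  have F: "AE r in lborel. r \<in> {0..R0} \<longrightarrow> f1 r = 1 * f2 r" by (rule coef_eq_imp[OF R0 f1 f2 feq])
  have G: "AE r in lborel. r \<in> {0..R0} \<longrightarrow> g1 r = s * g2 r" by (rule coef_eq_imp[OF R0 g1 g2 s(2)])
  show ?thesis
  proof (intro conjI)
    show "AE r in lborel. r \<in> {0..R0} \<longrightarrow> f1 r = f2 r" using F by simp
    show "(AE r in lborel. r \<in> {0..R0} \<longrightarrow> g1 r = g2 r) \<or> (AE r in lborel. r \<in> {0..R0} \<longrightarrow> g1 r = - g2 r)"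
      using s(1)
    proof
      assume "s = 1" then show ?thesis using G by simp
    next
      assume "s = -1" then show ?thesis using G by simp
    qed
  qed
qed

end
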